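(* Let $q\ge2$, let $s\ge2$ be an even integer, and let $\bm x=(x_1,\ldots,x_d)^\top$, $\bm y=(y_1,\ldots,y_d)^\top$ be random vectors in $\mathbb R^d$ with $\||\bm x|_s\|_q<\infty$ and $\||\bm y|_s\|_q<\infty$. Then $$\big\||\bm x+\bm y|_s\big\|_q^2\le\big\||\bm x|_s\big\|_q^2+2\big\||\bm x|_s\big\|_q^{2-q}\,\mathbb E\Big(|\bm x|_s^{q-s}\sum_{j=1}^dx_j^{s-1}y_j\Big)+\big(\max\{q,s\}-1\big)\big\||\bm y|_s\big\|_q^2,$$ where the middle term is interpreted as $0$ if $\||\bm x|_s\|_q=0$ and $|\bm x|_s^{q-s}\sum_jx_j^{s-1}y_j$ is interpreted as $0$ on $\{\bm x=0\}$. Moreover, if $\mathbb E[\bm y\mid\bm x]=0$ almost surely, then $$\big\||\bm x+\bm y|_s\big\|_q^2\le\big\||\bm x|_s\big\|_q^2+\big(\max\{q,s\}-1\big)\big\||\bm y|_s\big\|_q^2.$$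
   Context: $|\bm v|_s=(\sum_{i=1}^d|v_i|^s)^{1/s}$; for a real random variable $X$, $\|X\|_q=(\mathbb E|X|^q)^{1/q}$. *)

theory Defs
  imports "HOL-Probability.Probability"
begin

definition snorm :: "nat \<Rightarrow> real ^ 'd \<Rightarrow> real" where
  "snorm s v = (\<Sum>i\<in>UNIV. \<bar>v $ i\<bar> ^ s) powr (1 / real s)"

definition Lq_norm :: "'a measure \<Rightarrow> real \<Rightarrow> ('a \<Rightarrow> real) \<Rightarrow> real" where
  "Lq_norm M q Z = (\<integral>\<omega>. \<bar>Z \<omega>\<bar> powr q \<partial>M) powr (1 / q)"

end

theory Submission imports Defs begin


lemma young_norm:
  fixes x y A B \<alpha> :: real
  assumes "x \<ge> 0" "y \<ge> 0" "A > 0" "B > 0" "0 < \<alpha>" "\<alpha> < 1"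
  shows "x powr \<alpha> * y powr (1-\<alpha>) \<le> A powr \<alpha> * B powr (1-\<alpha>) * (\<alpha> * (x/A) + (1-\<alpha>) * (y/B))"
proof (cases "x = 0 \<or> y = 0")
  case True
  then show ?thesis using assms by (auto intro!: mult_nonneg_nonneg)
next
  case False
  then have xy: "x > 0" "y > 0" using assms by auto
  have "(x/A) powr \<alpha> * (y/B) powr (1-\<alpha>) \<le> \<alpha> * (x/A) + (1-\<alpha>) * (y/B)"
    using Youngs_inequality_0[of \<alpha> "1-\<alpha>" "x/A" "y/B"] assms xy by auto
  moreover have "(x/A) powr \<alpha> * (y/B) powr (1-\<alpha>) = x powr \<alpha> * y powr (1-\<alpha>) / (A powr \<alpha> * B powr (1-\<alpha>))"
    using assms xy by (simp add: powr_divide)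
  moreover have "A powr \<alpha> * B powr (1-\<alpha>) > 0" using assms by simp
  ultimately show ?thesis by (simp add: divide_le_eq mult.commute)
qed

lemma young_plain:
  fixes x y \<alpha> :: real
  assumes "x \<ge> 0" "y \<ge> 0" "0 < \<alpha>" "\<alpha> < 1"
  shows "x powr \<alpha> * y powr (1-\<alpha>) \<le> \<alpha> * x + (1-\<alpha>) * y"
  using young_norm[of x y 1 1 \<alpha>] assms by simp

lemma holder_sum:
  fixes a b :: "'i \<Rightarrow> real"
  assumes "finite I" "\<And>i. i\<in>I \<Longrightarrow> a i \<ge> 0" "\<And>i. i\<in>I \<Longrightarrow> b i \<ge> 0" "0 < \<alpha>" "\<alpha> < 1"
  shows "(\<Sum>i\<in>I. a i powr \<alpha> * b i powr (1-\<alpha>)) \<le> (\<Sum>i\<in>I. a i) powr \<alpha> * (\<Sum>i\<in>I. b i) powr (1-\<alpha>)"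
proof -
  define A where "A = (\<Sum>i\<in>I. a i)"
  define B where "B = (\<Sum>i\<in>I. b i)"
  have A0: "A \<ge> 0" "B \<ge> 0" unfolding A_def B_def using assms by (auto intro: sum_nonneg)
  show ?thesis
  proof (cases "A = 0 \<or> B = 0")
    case True
    then have "\<forall>i\<in>I. a i = 0 \<or> b i = 0" using assms sum_nonneg_eq_0_iff unfolding A_def B_def by metis
    then have "(\<Sum>i\<in>I. a i powr \<alpha> * b i powr (1-\<alpha>)) = 0" by (intro sum.neutral) auto
    then show ?thesis by simp
  next
    case False
    then have AB: "A > 0" "B > 0" using A0 by auto
    have "(\<Sum>i\<in>I. a i powr \<alpha> * b i powr (1-\<alpha>)) \<le> (\<Sum>i\<in>I. A powr \<alpha> * B powr (1-\<alpha>) * (\<alpha> * (a i/A) + (1-\<alpha>) * (b i/B)))"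
      by (intro sum_mono young_norm) (use assms AB in auto)
    also have "\<dots> = A powr \<alpha> * B powr (1-\<alpha>) * (\<alpha> * (\<Sum>i\<in>I. a i)/A + (1-\<alpha>) * (\<Sum>i\<in>I. b i)/B)"
      by (simp add: sum_distrib_left sum.distrib sum_divide_distrib[symmetric] algebra_simps)
    also have "\<dots> = A powr \<alpha> * B powr (1-\<alpha>)" using AB unfolding A_def B_def by simp
    finally show ?thesis unfolding A_def B_def .
  qed
qed



lemma pow_powr:
  fixes t a :: real
  assumes "t \<ge> 0" "s > 0"
  shows "(t ^ s) powr (a / real s) = t powr a"
proof (cases "t = 0")
  case True then show ?thesis using assms by simp
next
  case False
  then have "t > 0" using assms by simp
  then have "t ^ s = t powr real s" by (simp add: powr_realpow)
  then show ?thesis using assms \<open>t>0\<close> by (simp add: powr_powr)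
qed

definition Pn :: "nat \<Rightarrow> real ^ 'd \<Rightarrow> real" where
  "Pn s v = (\<Sum>j\<in>UNIV. (v $ j) ^ s)"

lemma Pn_nonneg: "even s \<Longrightarrow> Pn s v \<ge> 0"
  unfolding Pn_def by (intro sum_nonneg) (simp add: zero_le_even_power)

lemma snorm_Pn: "even s \<Longrightarrow> snorm s v = Pn s v powr (1 / real s)"
  unfolding snorm_def Pn_def by (simp add: power_even_abs)

lemma snorm_nonneg: "snorm s v \<ge> 0"
  unfolding snorm_def by simp

lemma snorm_powr: "even s \<Longrightarrow> s > 0 \<Longrightarrow> snorm s v powr a = Pn s v powr (a / real s)"
  using Pn_nonneg[of s v] by (simp add: snorm_Pn powr_powr)

lemma Pn_snorm: "even s \<Longrightarrow> s > 0 \<Longrightarrow> Pn s v = snorm s v ^ s"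
proof -
  assume a: "even s" "s > 0"
  have "snorm s v ^ s = snorm s v powr real s"
    using snorm_nonneg[of s v] a
    by (cases "snorm s v = 0") (auto simp: powr_realpow)
  also have "\<dots> = Pn s v" using snorm_powr[OF a, of v "real s"] a Pn_nonneg[of s v] by simp
  finally show ?thesis by simp
qed

lemma comp_le_Pn: "even s \<Longrightarrow> (v $ j) ^ s \<le> Pn s v"
  unfolding Pn_def
  by (rule member_le_sum) (auto simp: zero_le_even_power)

lemma comp_le_snorm: "even s \<Longrightarrow> s > 0 \<Longrightarrow> \<bar>v $ j\<bar> \<le> snorm s v"
proof -
  assume a: "even s" "s > 0"
  have "\<bar>v $ j\<bar> ^ s \<le> snorm s v ^ s"
    using comp_le_Pn[of s v j] Pn_snorm[OF a, of v] power_even_abs[OF a(1), of "v$j"] by (simp add: a)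
  then show ?thesis using snorm_nonneg[of s v] a
    by (metis Suc_diff_1 power_le_imp_le_base)
qed

lemma snorm_zero_iff: "even s \<Longrightarrow> s > 0 \<Longrightarrow> snorm s v = 0 \<longleftrightarrow> v = 0"
proof
  assume a: "even s" "s > 0" "snorm s v = 0"
  show "v = 0"
    using comp_le_snorm[of s v] a by (simp add: vec_eq_iff)
next
  assume "v = 0" "s > 0" then show "snorm s v = 0" unfolding snorm_def by simp
qed

lemma holder_A_Pn:
  assumes "even s" "s \<ge> 2"
  shows "\<bar>\<Sum>j\<in>UNIV. (v $ j) ^ (s - 1) * y $ j\<bar> \<le> Pn s v powr ((real s - 1) / real s) * Pn s y powr (1 / real s)"
proof -
  have s0: "s > 0" using assms by simp
  have "\<bar>\<Sum>j\<in>UNIV. (v $ j) ^ (s - 1) * y $ j\<bar> \<le> (\<Sum>j\<in>UNIV. \<bar>(v $ j) ^ (s - 1) * y $ j\<bar>)"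
    by (rule sum_abs)
  also have "\<dots> = (\<Sum>j\<in>UNIV. ((v $ j) ^ s) powr ((real s - 1)/real s) * ((y $ j) ^ s) powr (1 - (real s - 1)/real s))"
  proof (rule sum.cong)
    fix j
    have e1: "(v $ j) ^ s = \<bar>v $ j\<bar> ^ s" "(y $ j) ^ s = \<bar>y $ j\<bar> ^ s" using assms by (auto simp: power_even_abs)
    have e2: "1 - (real s - 1)/real s = 1 / real s" using s0 by (simp add: field_simps)
    have "\<bar>v $ j\<bar> powr (real s - 1) = \<bar>v $ j\<bar> powr (real (s - 1))" using assms by (simp add: of_nat_diff)
    also have "\<dots> = \<bar>v $ j\<bar> ^ (s - 1)"
      using assms by (cases "v $ j = 0") (simp, metis powr_realpow zero_less_abs_iff)
    finally have "\<bar>v $ j\<bar> powr (real s - 1) = \<bar>v $ j\<bar> ^ (s - 1)" .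
    then show "\<bar>(v $ j) ^ (s - 1) * y $ j\<bar> = ((v $ j) ^ s) powr ((real s - 1)/real s) * ((y $ j) ^ s) powr (1 - (real s - 1)/real s)"
      unfolding e1 e2 using s0 by (simp add: pow_powr abs_mult power_abs)
  qed simp
  also have "\<dots> \<le> Pn s v powr ((real s - 1)/real s) * Pn s y powr (1 - (real s - 1)/real s)"
    unfolding Pn_def using assms
    by (intro holder_sum) (auto simp: zero_le_even_power)
  also have "1 - (real s - 1)/real s = 1 / real s" using s0 by (simp add: field_simps)
  finally show ?thesis .
qed

lemma holder_B_Pn:
  assumes "even s" "s > 2"
  shows "(\<Sum>j\<in>UNIV. (v $ j) ^ (s - 2) * (y $ j)^2) \<le> Pn s v powr ((real s - 2) / real s) * Pn s y powr (2 / real s)"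
proof -
  have s0: "s > 0" using assms by simp
  have "(\<Sum>j\<in>UNIV. (v $ j) ^ (s - 2) * (y $ j)^2) = (\<Sum>j\<in>UNIV. ((v $ j) ^ s) powr ((real s - 2)/real s) * ((y $ j) ^ s) powr (1 - (real s - 2)/real s))"
  proof (rule sum.cong)
    fix j
    have e1: "(v $ j) ^ s = \<bar>v $ j\<bar> ^ s" "(y $ j) ^ s = \<bar>y $ j\<bar> ^ s" using assms by (auto simp: power_even_abs)
    have e2: "1 - (real s - 2)/real s = 2 / real s" using s0 by (simp add: field_simps)
    have "\<bar>v $ j\<bar> powr (real s - 2) = \<bar>v $ j\<bar> powr (real (s - 2))" using assms by (simp add: of_nat_diff)
    also have "\<dots> = \<bar>v $ j\<bar> ^ (s - 2)"
      using assms by (cases "v $ j = 0") (simp, metis powr_realpow zero_less_abs_iff)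
    finally have "\<bar>v $ j\<bar> powr (real s - 2) = \<bar>v $ j\<bar> ^ (s - 2)" .
    moreover have "(v $ j) ^ (s - 2) = \<bar>v $ j\<bar> ^ (s - 2)" using assms
      by (simp add: power_even_abs)
    moreover have "\<bar>y $ j\<bar> powr 2 = (y $ j)^2"
      by (cases "y $ j = 0") (auto simp: powr_realpow)
    ultimately show "(v $ j) ^ (s - 2) * (y $ j)^2 = ((v $ j) ^ s) powr ((real s - 2)/real s) * ((y $ j) ^ s) powr (1 - (real s - 2)/real s)"
      unfolding e1 e2 using s0 by (simp add: pow_powr)
  qed simp
  also have "\<dots> \<le> Pn s v powr ((real s - 2)/real s) * Pn s y powr (1 - (real s - 2)/real s)"
    unfolding Pn_def using assms
    by (intro holder_sum) (auto simp: zero_le_even_power)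
  also have "1 - (real s - 2)/real s = 2 / real s" using s0 by (simp add: field_simps)
  finally show ?thesis .
qed



lemma absp:
  fixes t :: real
  assumes "even s" "s > 0" "k > 0"
  shows "(t ^ s) powr (real k / real s) = \<bar>t\<bar> ^ k"
proof -
  have "(t ^ s) = \<bar>t\<bar> ^ s" using assms by (simp add: power_even_abs)
  then have "(t ^ s) powr (real k / real s) = \<bar>t\<bar> powr (real k)" using assms by (simp add: pow_powr)
  also have "\<dots> = \<bar>t\<bar> ^ k" using assms by (cases "t = 0") (auto simp: powr_realpow)
  finally show ?thesis .
qed

lemma snorm_minkowski:
  assumes "even s" "s \<ge> 2"
  shows "snorm s (x + y) \<le> snorm s x + snorm s y"
proof -
  have s0: "s > 0" using assms by simp
  define T where "T = Pn s (x + y)"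
  have T0: "T \<ge> 0" unfolding T_def using Pn_nonneg assms by blast
  define w where "w = x + y"
  have key: "\<And>z::real^'a. (\<Sum>j\<in>UNIV. \<bar>z $ j\<bar> * \<bar>w $ j\<bar> ^ (s - 1)) \<le> snorm s z * T powr ((real s - 1) / real s)"
  proof -
    fix z :: "real^'a"
    have "(\<Sum>j\<in>UNIV. \<bar>z $ j\<bar> * \<bar>w $ j\<bar> ^ (s - 1)) = (\<Sum>j\<in>UNIV. ((z $ j)^s) powr (1/real s) * ((w $ j)^s) powr (1 - 1/real s))"
    proof (rule sum.cong)
      fix j
      have e: "1 - 1/real s = real (s - 1) / real s" using s0 by (simp add: field_simps of_nat_diff)
      show "\<bar>z $ j\<bar> * \<bar>w $ j\<bar> ^ (s - 1) = ((z $ j)^s) powr (1/real s) * ((w $ j)^s) powr (1 - 1/real s)"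
        unfolding e using absp[OF assms(1) s0, of 1 "z $ j"] absp[OF assms(1) s0, of "s - 1" "w $ j"] assms
        by simp
    qed simp
    also have "\<dots> \<le> Pn s z powr (1/real s) * Pn s w powr (1 - 1/real s)"
      unfolding Pn_def using assms by (intro holder_sum) (auto simp: zero_le_even_power)
    also have "1 - 1/real s = (real s - 1) / real s" using s0 by (simp add: field_simps)
    finally show "(\<Sum>j\<in>UNIV. \<bar>z $ j\<bar> * \<bar>w $ j\<bar> ^ (s - 1)) \<le> snorm s z * T powr ((real s - 1) / real s)"
      unfolding T_def w_def snorm_Pn[OF assms(1)] .
  qed
  have "T = (\<Sum>j\<in>UNIV. \<bar>w $ j\<bar> * \<bar>w $ j\<bar> ^ (s - 1))"
    unfolding T_def Pn_def w_def using assms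
    by (intro sum.cong refl) (metis Suc_diff_1 s0 power_Suc power_even_abs)
  also have "\<dots> \<le> (\<Sum>j\<in>UNIV. \<bar>x $ j\<bar> * \<bar>w $ j\<bar> ^ (s - 1) + \<bar>y $ j\<bar> * \<bar>w $ j\<bar> ^ (s - 1))"
    by (intro sum_mono) (simp add: w_def distrib_right[symmetric] mult_right_mono)
  also have "\<dots> \<le> (snorm s x + snorm s y) * T powr ((real s - 1) / real s)"
    unfolding sum.distrib distrib_right using key[of x] key[of y] by linarith
  finally have T1: "T \<le> (snorm s x + snorm s y) * T powr ((real s - 1) / real s)" .
  show ?thesis
  proof (cases "T = 0")
    case True
    then show ?thesis using snorm_nonneg[of s x] snorm_nonneg[of s y]
      unfolding T_def snorm_Pn[OF assms(1)] by simp
  next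
    case False
    then have Tp: "T > 0" using T0 by simp
    have "T = T powr (1/real s) * T powr ((real s - 1) / real s)"
      using Tp s0 by (simp add: powr_add[symmetric] add_divide_distrib[symmetric])
    then have "T powr (1/real s) * T powr ((real s - 1) / real s) \<le> (snorm s x + snorm s y) * T powr ((real s - 1) / real s)"
      using T1 by simp
    then have "T powr (1/real s) \<le> snorm s x + snorm s y"
      using Tp by (simp add: mult_le_cancel_right)
    then show ?thesis unfolding T_def snorm_Pn[OF assms(1)] .
  qed
qed

lemma snorm_scale:
  assumes "even s" "s > 0"
  shows "snorm s (c *\<^sub>R v) = \<bar>c\<bar> * snorm s v"
proof -
  have e: "Pn s (c *\<^sub>R v) = \<bar>c\<bar> ^ s * Pn s v"
    unfolding Pn_def using assms by (simp add: sum_distrib_left power_mult_distrib power_even_abs)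
  have "snorm s (c *\<^sub>R v) = (\<bar>c\<bar> ^ s * Pn s v) powr (1 / real s)"
    using snorm_Pn[OF assms(1), of "c *\<^sub>R v"] e by simp
  also have "\<dots> = (\<bar>c\<bar> ^ s) powr (1 / real s) * Pn s v powr (1 / real s)"
    using Pn_nonneg[OF assms(1)] by (simp add: powr_mult)
  also have "(\<bar>c\<bar> ^ s) powr (1 / real s) = \<bar>c\<bar>" using pow_powr[of "\<bar>c\<bar>" s 1] assms by simp
  finally show ?thesis using snorm_Pn[OF assms(1), of v] by simp
qed

lemma snorm_neg: "even s \<Longrightarrow> snorm s (- v) = snorm s v"
  unfolding snorm_def by simp

lemma holder_A_snorm:
  assumes "even s" "s \<ge> 2"
  shows "\<bar>\<Sum>j\<in>UNIV. (v $ j) ^ (s - 1) * y $ j\<bar> \<le> snorm s v ^ (s - 1) * snorm s y"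
proof -
  have s0: "s > 0" using assms by simp
  have "Pn s v powr ((real s - 1) / real s) = snorm s v powr (real s - 1)"
    using snorm_powr[OF assms(1) s0, of v "real s - 1"] by simp
  also have "\<dots> = snorm s v ^ (s - 1)"
    using snorm_nonneg[of s v] assms
    by (cases "snorm s v = 0") (auto simp: powr_realpow[symmetric] of_nat_diff)
  finally show ?thesis using holder_A_Pn[OF assms, of v y] snorm_Pn[OF assms(1), of y] by simp
qed



lemma powr_subadd:
  fixes a b p :: real
  assumes "a \<ge> 0" "b \<ge> 0" "0 < p" "p \<le> 1"
  shows "(a + b) powr p \<le> a powr p + b powr p"
proof (cases "a + b = 0")
  case True then show ?thesis using assms by simp
next
  case False
  then have c: "a + b > 0" using assms by simp
  have k: "z powr p \<ge> z * (a+b) powr (p - 1)" if "0 \<le> z" "z \<le> a + b" for z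
  proof (cases "z = 0")
    case True then show ?thesis by simp
  next
    case False
    then have z: "z > 0" using that by simp
    have "(a+b) powr (p - 1) \<le> z powr (p - 1)" using powr_mono2'[of "p-1" z "a+b"] z that assms by simp
    then have "z * (a+b) powr (p - 1) \<le> z * z powr (p - 1)" using z by simp
    also have "\<dots> = z powr p" using z by (simp add: powr_mult_base)
    finally show ?thesis .
  qed
  have "(a + b) powr p = (a+b) * (a+b) powr (p - 1)" using c by (simp add: powr_mult_base)
  also have "\<dots> = a * (a+b) powr (p-1) + b * (a+b) powr (p-1)" by (simp add: algebra_simps)
  also have "\<dots> \<le> a powr p + b powr p" using k[of a] k[of b] assms by simp
  finally show ?thesis .
qed

locale qs =
  fixes q :: real and s :: nat
  assumes q2: "q \<ge> 2" and s2: "s \<ge> 2" and ev: "even s"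
begin

definition mm :: real where "mm = max q (real s)"

lemma s0: "s > 0" using s2 by simp

lemma mm2: "mm \<ge> 2" unfolding mm_def using q2 by simp

lemma taylor_eps:
  fixes x y :: "real ^ 'd"
  assumes eps: "\<epsilon> > 0"
  shows "(Pn s (x+y) + \<epsilon>) powr (q/s) \<le> (Pn s x + \<epsilon>) powr (q/s)
     + q * (Pn s x + \<epsilon>) powr (q/s - 1) * (\<Sum>j\<in>UNIV. (x$j)^(s-1) * y$j)
     + q*(mm-1)/2 * (snorm s x + snorm s y + \<epsilon> powr (1/s)) powr (q-2) * (snorm s y)^2"
proof -
  define S where "S t = (\<Sum>j\<in>UNIV. (x$j + t*y$j)^s)" for t
  define S1 where "S1 t = (\<Sum>j\<in>UNIV. real s * (x$j + t*y$j)^(s-1) * y$j)" for t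
  define S2 where "S2 t = (\<Sum>j\<in>UNIV. real s * (real (s-1) * (x$j + t*y$j)^(s-2) * y$j) * y$j)" for t
  have Snn: "S t \<ge> 0" for t unfolding S_def using ev by (intro sum_nonneg) (simp add: zero_le_even_power)
  have Sp: "S t + \<epsilon> > 0" for t using Snn[of t] eps by simp
  have dS: "DERIV S t :> S1 t" for t
    unfolding S_def S1_def
    by (intro DERIV_sum) (auto intro!: derivative_eq_intros)
  have dS1: "DERIV S1 t :> S2 t" for t
    unfolding S1_def S2_def
    by (intro DERIV_sum) (auto intro!: derivative_eq_intros simp: diff_diff_left numeral_2_eq_2)
  define g where "g t = (S t + \<epsilon>) powr (q/s)" for t
  define g1 where "g1 t = (q/s) * (S t + \<epsilon>) powr (q/s - 1) * S1 t" for t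
  define g2 where "g2 t = (q/s) * ((q/s - 1) * (S t + \<epsilon>) powr (q/s - 1 - 1) * S1 t * S1 t + (S t + \<epsilon>) powr (q/s - 1) * S2 t)" for t
  have dg: "DERIV g t :> g1 t" for t
  proof -
    have "DERIV (\<lambda>t. S t + \<epsilon>) t :> S1 t + 0" by (intro derivative_intros dS)
    from DERIV_fun_powr[OF this Sp[of t], of "q/s"] show ?thesis unfolding g_def g1_def by simp
  qed
  have dg1: "DERIV g1 t :> g2 t" for t
  proof -
    have d0: "DERIV (\<lambda>t. S t + \<epsilon>) t :> S1 t + 0" by (intro derivative_intros dS)
    have dh: "DERIV (\<lambda>t. (S t + \<epsilon>) powr (q/s - 1)) t :> (q/s - 1) * (S t + \<epsilon>) powr (q/s - 1 - of_nat 1) * (S1 t + 0)"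
      by (rule DERIV_fun_powr[OF d0 Sp[of t]])
    have "DERIV (\<lambda>t. (q/s) * ((S t + \<epsilon>) powr (q/s - 1) * S1 t)) t :>
           (q/s) * ((q/s - 1) * (S t + \<epsilon>) powr (q/s - 1 - of_nat 1) * (S1 t + 0) * S1 t + S2 t * (S t + \<epsilon>) powr (q/s - 1))"
      by (intro DERIV_cmult DERIV_mult dh dS1)
    moreover have "g1 = (\<lambda>t. (q/s) * ((S t + \<epsilon>) powr (q/s - 1) * S1 t))" by (auto simp: g1_def fun_eq_iff)
    ultimately show ?thesis unfolding g2_def by (simp add: algebra_simps)
  qed
  define diff where "diff n = (if n = 0 then g else if n = 1 then g1 else g2)" for n :: nat
  have "\<exists>t::real. 0 < t \<and> t < 1 \<and>
    g 1 = (\<Sum>m<2. (diff m 0 / fact m) * (1 - 0)^m) + (diff 2 t / fact 2) * (1 - 0)^2"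
  proof (rule Taylor_up)
    show "\<forall>m t. m < 2 \<and> 0 \<le> t \<and> t \<le> 1 \<longrightarrow> DERIV (diff m) t :> diff (Suc m) t"
      using dg dg1 unfolding diff_def by (auto simp: less_2_cases_iff)
  qed (auto simp: diff_def)
  then obtain \<xi> where xi: "0 < \<xi>" "\<xi> < 1" and tay: "g 1 = g 0 + g1 0 + g2 \<xi> / 2"
    by (auto simp: diff_def numeral_2_eq_2)
  define v where "v = x + \<xi> *\<^sub>R y"
  define A where "A = (\<Sum>j\<in>UNIV. (v$j)^(s-1) * y$j)"
  define B where "B = (\<Sum>j\<in>UNIV. (v$j)^(s-2) * (y$j)^2)"
  define T where "T = S \<xi> + \<epsilon>"
  define Y2 where "Y2 = (snorm s y)^2"
  have Tp: "T > 0" unfolding T_def using Sp .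
  have SPv: "S \<xi> = Pn s v" unfolding S_def Pn_def v_def by simp
  have PvT: "Pn s v \<le> T" using SPv eps unfolding T_def by simp
  have Pv0: "Pn s v \<ge> 0" using Pn_nonneg[OF ev] .
  have S1A: "S1 \<xi> = real s * A" unfolding S1_def A_def v_def by (simp add: sum_distrib_left mult.assoc)
  have S2B: "S2 \<xi> = real s * real (s-1) * B" unfolding S2_def B_def v_def
    by (simp add: sum_distrib_left mult.assoc power2_eq_square)
  have Y2e: "Y2 = Pn s y powr (2 / real s)"
    unfolding Y2_def using snorm_powr[OF ev s0, of y 2] snorm_nonneg[of s y]
    by (simp add: powr_realpow[symmetric] del: powr_realpow) 
  have g2e: "g2 \<xi> = q * (q - s) * (T powr (q/s - 2) * A^2) + q * (real s - 1) * (T powr (q/s - 1) * B)"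
  proof -
    have "q/s - 1 - 1 = q/s - 2" by simp
    then show ?thesis unfolding g2_def T_def[symmetric] S1A S2B using s0 s2
      by (simp add: field_simps power2_eq_square of_nat_diff)
  qed
  define W where "W = T powr ((q-2)/s) * Y2"
  have W0: "W \<ge> 0" unfolding W_def Y2_def by simp
  have A2: "T powr (q/s - 2) * A^2 \<le> W"
  proof -
    have "\<bar>A\<bar> \<le> Pn s v powr ((real s - 1) / real s) * Pn s y powr (1 / real s)"
      unfolding A_def by (rule holder_A_Pn[OF ev s2])
    also have "\<dots> \<le> T powr ((real s - 1) / real s) * Pn s y powr (1 / real s)"
      using PvT Pv0 s2 by (intro mult_right_mono powr_mono2) auto
    finally have "\<bar>A\<bar> \<le> T powr ((real s - 1) / real s) * snorm s y" using snorm_Pn[OF ev, of y] by simp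
    then have "A^2 \<le> (T powr ((real s - 1) / real s) * snorm s y)^2"
      using abs_le_square_iff by (metis abs_ge_zero abs_le_self_iff abs_power2 order_trans power2_abs power_mono)
    then have "T powr (q/s - 2) * A^2 \<le> T powr (q/s - 2) * (T powr ((real s - 1) / real s) * snorm s y)^2"
      by (simp add: mult_left_mono)
    also have "\<dots> = T powr (q/s - 2 + (real s - 1) / real s + (real s - 1) / real s) * Y2"
      unfolding Y2_def power2_eq_square powr_add by (simp only: mult_ac)
    also have "q/s - 2 + (real s - 1) / real s + (real s - 1) / real s = (q-2)/s"
      using s0 by (simp add: field_simps)
    finally show ?thesis unfolding W_def .
  qed
  have BB: "T powr (q/s - 1) * B \<le> W"
  proof (cases "s = 2")
    case True
    then have "B = Pn s y" unfolding B_def Pn_def by simp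
    then have "B = Y2" using Y2e True Pn_nonneg[OF ev, of y]
      by simp
    moreover have "q/s - 1 = (q-2)/s" using True by (simp add: field_simps)
    ultimately show ?thesis unfolding W_def by simp
  next
    case False
    then have s3: "s > 2" using s2 by simp
    have "B \<le> Pn s v powr ((real s - 2) / real s) * Pn s y powr (2 / real s)"
      unfolding B_def by (rule holder_B_Pn[OF ev s3])
    also have "\<dots> \<le> T powr ((real s - 2) / real s) * Y2"
      unfolding Y2e using PvT Pv0 s3 by (intro mult_right_mono powr_mono2) auto
    finally have "T powr (q/s - 1) * B \<le> T powr (q/s - 1) * (T powr ((real s - 2) / real s) * Y2)"
      by (simp add: mult_left_mono)
    also have "\<dots> = T powr (q/s - 1 + (real s - 2) / real s) * Y2"
      unfolding powr_add by (simp only: mult_ac)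
    also have "q/s - 1 + (real s - 2) / real s = (q-2)/s"
      using s0 by (simp add: field_simps)
    finally show ?thesis unfolding W_def .
  qed
  have g2W: "g2 \<xi> \<le> q * (mm - 1) * W"
  proof (cases "q \<ge> s")
    case True
    then have "g2 \<xi> \<le> q * (q - s) * W + q * (real s - 1) * W"
      unfolding g2e using q2 s2 A2 BB by (intro add_mono mult_left_mono) auto
    also have "\<dots> = q * (mm - 1) * W" unfolding mm_def using True by (simp add: algebra_simps)
    finally show ?thesis .
  next
    case False
    have "q * (q - s) * (T powr (q/s - 2) * A^2) \<le> 0"
    proof (rule mult_nonpos_nonneg)
      show "q * (q - s) \<le> 0" using False q2 by (intro mult_nonneg_nonpos) auto
    qed simp
    moreover have "q * (real s - 1) * (T powr (q/s - 1) * B) \<le> q * (real s - 1) * W"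
      by (rule mult_left_mono[OF BB]) (use q2 s2 in auto)
    ultimately have "g2 \<xi> \<le> q * (real s - 1) * W"
      unfolding g2e by linarith
    also have "\<dots> = q * (mm - 1) * W" unfolding mm_def using False by (simp add: algebra_simps)
    finally show ?thesis .
  qed
  have WB: "W \<le> (snorm s x + snorm s y + \<epsilon> powr (1/s)) powr (q-2) * Y2"
  proof -
    have "T powr (1/s) \<le> Pn s v powr (1/s) + \<epsilon> powr (1/s)"
      unfolding T_def SPv using powr_subadd[of "Pn s v" \<epsilon> "1/s"] Pv0 eps s0 by simp
    also have "Pn s v powr (1/s) = snorm s v" using snorm_Pn[OF ev, of v] by simp
    also have "snorm s v \<le> snorm s x + snorm s y"
    proof -
      have "snorm s v \<le> snorm s x + snorm s (\<xi> *\<^sub>R y)" unfolding v_def by (rule snorm_minkowski[OF ev s2])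
      also have "snorm s (\<xi> *\<^sub>R y) = \<xi> * snorm s y" using snorm_scale[OF ev s0, of \<xi> y] xi by (metis abs_of_pos)
      also have "\<xi> * snorm s y \<le> snorm s y" using xi snorm_nonneg[of s y] by (simp add: mult_left_le_one_le)
      finally show ?thesis by simp
    qed
    finally have tb: "T powr (1/s) \<le> snorm s x + snorm s y + \<epsilon> powr (1/s)" by simp
    have "T powr ((q-2)/s) = (T powr (1/s)) powr (q-2)" by (simp add: powr_powr)
    also have "\<dots> \<le> (snorm s x + snorm s y + \<epsilon> powr (1/s)) powr (q-2)"
      using tb q2 by (intro powr_mono2) auto
    finally show ?thesis unfolding W_def Y2_def by (simp add: mult_right_mono)
  qed
  have "g 1 \<le> g 0 + g1 0 + q * (mm - 1) * ((snorm s x + snorm s y + \<epsilon> powr (1/s)) powr (q-2) * Y2) / 2"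
  proof -
    have "q * (mm - 1) * W \<le> q * (mm - 1) * ((snorm s x + snorm s y + \<epsilon> powr (1/s)) powr (q-2) * Y2)"
      by (rule mult_left_mono[OF WB]) (use q2 mm2 in auto)
    then show ?thesis using tay g2W by linarith
  qed
  moreover have "g 1 = (Pn s (x+y) + \<epsilon>) powr (q/s)" unfolding g_def S_def Pn_def by simp
  moreover have "g 0 = (Pn s x + \<epsilon>) powr (q/s)" unfolding g_def S_def Pn_def by simp
  moreover have "g1 0 = q * (Pn s x + \<epsilon>) powr (q/s - 1) * (\<Sum>j\<in>UNIV. (x$j)^(s-1) * y$j)"
    unfolding g1_def S_def S1_def Pn_def using s0 by (simp add: sum_distrib_left mult.assoc)
  ultimately show ?thesis unfolding Y2_def by (simp add: algebra_simps)
qed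

end


context qs begin

definition Dd :: "real^'d \<Rightarrow> real^'d \<Rightarrow> real" where
  "Dd x y = (if x = 0 then 0 else snorm s x powr (q - real s) * (\<Sum>j\<in>UNIV. (x$j)^(s-1) * y$j))"

lemma snorm_powq: "snorm s v powr q = Pn s v powr (q / real s)"
  using snorm_powr[OF ev s0, of v q] by simp

lemma pointwise:
  fixes x y :: "real ^ 'd"
  shows "snorm s (x+y) powr q \<le> snorm s x powr q + q * Dd x y
     + q*(mm-1)/2 * (snorm s x + snorm s y) powr (q-2) * (snorm s y)^2"
proof (cases "y = 0")
  case True
  have "snorm s (0::real^'d) = 0" by (simp add: snorm_zero_iff[OF ev s0])
  moreover have "Dd x 0 = 0" by (simp add: Dd_def)
  ultimately show ?thesis using True by simp
next
  case False
  then have sy: "snorm s y > 0" using snorm_zero_iff[OF ev s0, of y] snorm_nonneg[of s y] by simp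
  define A0 where "A0 = (\<Sum>j\<in>UNIV. (x$j)^(s-1) * y$j)"
  define F where "F \<epsilon> = (Pn s x + \<epsilon>) powr (q/s)
     + q * (Pn s x + \<epsilon>) powr (q/s - 1) * A0
     + q*(mm-1)/2 * (snorm s x + snorm s y + \<epsilon> powr (1/s)) powr (q-2) * (snorm s y)^2" for \<epsilon>
  have Px0: "Pn s x \<ge> 0" using Pn_nonneg[OF ev] .
  have qs0: "q / real s > 0" using q2 s0 by simp
  have lim_id: "((\<lambda>\<epsilon>::real. Pn s x + \<epsilon>) \<longlongrightarrow> Pn s x) (at_right 0)"
    using tendsto_add[OF tendsto_const tendsto_ident_at, of "Pn s x" 0 "{0<..}"] by simp
  have ev_pos: "eventually (\<lambda>\<epsilon>::real. \<epsilon> > 0) (at_right 0)" by (simp add: eventually_at_right_less)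
  have L1: "((\<lambda>\<epsilon>. (Pn s x + \<epsilon>) powr (q/s)) \<longlongrightarrow> Pn s x powr (q/s)) (at_right 0)"
  proof (rule tendsto_powr'[OF lim_id tendsto_const])
    show "Pn s x \<noteq> 0 \<or> 0 < q / real s \<and> (\<forall>\<^sub>F \<epsilon> in at_right 0. 0 \<le> Pn s x + \<epsilon>)"
      using qs0 ev_pos Px0 by (auto elim!: eventually_mono)
  qed
  have L2: "((\<lambda>\<epsilon>. q * (Pn s x + \<epsilon>) powr (q/s - 1) * A0) \<longlongrightarrow> q * Dd x y) (at_right 0)"
  proof (cases "x = 0")
    case True
    have "s - 1 \<noteq> 0" using s2 by simp
    then have "A0 = 0" unfolding A0_def using True by (simp add: power_0_left)
    then show ?thesis using True unfolding Dd_def by simp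
  next
    case False
    then have "snorm s x > 0" using snorm_zero_iff[OF ev s0, of x] snorm_nonneg[of s x] by simp
    then have "Pn s x \<noteq> 0" using snorm_Pn[OF ev, of x] by auto
    then have "((\<lambda>\<epsilon>. q * (Pn s x + \<epsilon>) powr (q/s - 1) * A0) \<longlongrightarrow> q * Pn s x powr (q/s - 1) * A0) (at_right 0)"
      by (intro tendsto_intros lim_id tendsto_powr) auto
    moreover have "Pn s x powr (q/s - 1) = snorm s x powr (q - real s)"
      using snorm_powr[OF ev s0, of x "q - real s"] s0 by (simp add: diff_divide_distrib)
    ultimately show ?thesis using False unfolding Dd_def A0_def by (simp add: mult.assoc)
  qed
  have L3: "((\<lambda>\<epsilon>::real. (snorm s x + snorm s y + \<epsilon> powr (1/s)) powr (q-2)) \<longlongrightarrow> (snorm s x + snorm s y) powr (q-2)) (at_right 0)"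
  proof -
    have "((\<lambda>\<epsilon>::real. \<epsilon> powr (1/s)) \<longlongrightarrow> 0) (at_right 0)"
      by (rule tendsto_zero_powrI[OF tendsto_ident_at tendsto_const]) (use s0 ev_pos in \<open>auto elim!: eventually_mono\<close>)
    then have "((\<lambda>\<epsilon>::real. snorm s x + snorm s y + \<epsilon> powr (1/s)) \<longlongrightarrow> snorm s x + snorm s y + 0) (at_right 0)"
      by (intro tendsto_intros)
    then show ?thesis using sy snorm_nonneg[of s x] by (intro tendsto_powr) auto
  qed
  have LF: "(F \<longlongrightarrow> snorm s x powr q + q * Dd x y
     + q*(mm-1)/2 * (snorm s x + snorm s y) powr (q-2) * (snorm s y)^2) (at_right 0)"
    unfolding F_def snorm_powq by (intro tendsto_intros L1 L2 L3)
  have evle: "eventually (\<lambda>\<epsilon>. snorm s (x+y) powr q \<le> F \<epsilon>) (at_right 0)"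
    using ev_pos
  proof (rule eventually_mono)
    fix \<epsilon> :: real assume e: "\<epsilon> > 0"
    have "snorm s (x+y) powr q = Pn s (x+y) powr (q/s)" by (rule snorm_powq)
    also have "\<dots> \<le> (Pn s (x+y) + \<epsilon>) powr (q/s)"
      using e Pn_nonneg[OF ev, of "x+y"] qs0 by (intro powr_mono2) auto
    also have "\<dots> \<le> F \<epsilon>" unfolding F_def A0_def by (rule taylor_eps[OF e])
    finally show "snorm s (x+y) powr q \<le> F \<epsilon>" .
  qed
  show ?thesis
    by (rule tendsto_le[OF trivial_limit_at_right_real LF tendsto_const evle])
qed

end


lemma holder_int:
  fixes u v :: "'a \<Rightarrow> real"
  assumes [measurable]: "u \<in> borel_measurable M" "v \<in> borel_measurable M"
    and nn: "\<And>w. u w \<ge> 0" "\<And>w. v w \<ge> 0"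
    and iu: "integrable M u" and iv: "integrable M v"
    and al: "0 < \<alpha>" "\<alpha> < 1"
  shows "integrable M (\<lambda>w. u w powr \<alpha> * v w powr (1-\<alpha>))"
    "(\<integral>w. u w powr \<alpha> * v w powr (1-\<alpha>) \<partial>M) \<le> (\<integral>w. u w \<partial>M) powr \<alpha> * (\<integral>w. v w \<partial>M) powr (1-\<alpha>)"
proof -
  have ib: "integrable M (\<lambda>w. \<alpha> * u w + (1-\<alpha>) * v w)" using iu iv by auto
  show int: "integrable M (\<lambda>w. u w powr \<alpha> * v w powr (1-\<alpha>))"
  proof (rule Bochner_Integration.integrable_bound[OF ib])
    show "(\<lambda>w. u w powr \<alpha> * v w powr (1-\<alpha>)) \<in> borel_measurable M" by measurable
    show "AE w in M. norm (u w powr \<alpha> * v w powr (1-\<alpha>)) \<le> norm (\<alpha> * u w + (1-\<alpha>) * v w)"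
      using young_plain[OF nn(1) nn(2) al] nn al by (auto intro!: AE_I2 simp: abs_mult)
  qed
  define U where "U = (\<integral>w. u w \<partial>M)"
  define V where "V = (\<integral>w. v w \<partial>M)"
  have U0: "U \<ge> 0" "V \<ge> 0" unfolding U_def V_def using nn by auto
  show "(\<integral>w. u w powr \<alpha> * v w powr (1-\<alpha>) \<partial>M) \<le> (\<integral>w. u w \<partial>M) powr \<alpha> * (\<integral>w. v w \<partial>M) powr (1-\<alpha>)"
  proof (cases "U = 0 \<or> V = 0")
    case True
    then have "AE w in M. u w = 0 \<or> v w = 0"
    proof
      assume "U = 0"
      then have "AE w in M. u w = 0" unfolding U_def using integral_nonneg_eq_0_iff_AE[OF iu] nn by auto
      then show ?thesis by (auto elim: AE_mp)
    next
      assume "V = 0"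
      then have "AE w in M. v w = 0" unfolding V_def using integral_nonneg_eq_0_iff_AE[OF iv] nn by auto
      then show ?thesis by (auto elim: AE_mp)
    qed
    then have "AE w in M. u w powr \<alpha> * v w powr (1-\<alpha>) = 0" by (auto elim: AE_mp)
    then have "(\<integral>w. u w powr \<alpha> * v w powr (1-\<alpha>) \<partial>M) = (\<integral>w. 0 \<partial>M)"
      by (intro integral_cong_AE) auto
    then show ?thesis by simp
  next
    case False
    then have UV: "U > 0" "V > 0" using U0 by auto
    have "(\<integral>w. u w powr \<alpha> * v w powr (1-\<alpha>) \<partial>M) \<le> (\<integral>w. U powr \<alpha> * V powr (1-\<alpha>) * (\<alpha> * (u w / U) + (1-\<alpha>) * (v w / V)) \<partial>M)"
      by (intro integral_mono int) (use iu iv young_norm[OF nn(1) nn(2) UV al] in auto)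
    also have "\<dots> = U powr \<alpha> * V powr (1-\<alpha>) * (\<alpha> * (U / U) + (1-\<alpha>) * (V / V))"
      unfolding U_def V_def using iu iv by simp
    also have "\<dots> = U powr \<alpha> * V powr (1-\<alpha>)" using UV by simp
    finally show ?thesis unfolding U_def V_def .
  qed
qed

lemma powr_sum_bound:
  fixes a b q :: real
  assumes "a \<ge> 0" "b \<ge> 0" "q \<ge> 0"
  shows "(a + b) powr q \<le> 2 powr q * (a powr q + b powr q)"
proof -
  have "(a + b) powr q \<le> (2 * max a b) powr q" using assms by (intro powr_mono2) auto
  also have "\<dots> = 2 powr q * max a b powr q" using assms by (simp add: powr_mult)
  also have "max a b powr q \<le> a powr q + b powr q" by (simp add: max_def)
  finally show ?thesis by (simp add: mult_left_mono)
qed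

lemma minkowski_int:
  fixes a b :: "'a \<Rightarrow> real" and q :: real
  assumes [measurable]: "a \<in> borel_measurable M" "b \<in> borel_measurable M"
    and nn: "\<And>w. a w \<ge> 0" "\<And>w. b w \<ge> 0"
    and ia: "integrable M (\<lambda>w. a w powr q)" and ib: "integrable M (\<lambda>w. b w powr q)"
    and q: "q > 1"
  shows "integrable M (\<lambda>w. (a w + b w) powr q)"
    "(\<integral>w. (a w + b w) powr q \<partial>M) powr (1/q) \<le> (\<integral>w. a w powr q \<partial>M) powr (1/q) + (\<integral>w. b w powr q \<partial>M) powr (1/q)"
proof -
  show iab: "integrable M (\<lambda>w. (a w + b w) powr q)"
  proof (rule Bochner_Integration.integrable_bound)
    show "integrable M (\<lambda>w. 2 powr q * (a w powr q + b w powr q))" using ia ib by auto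
    show "(\<lambda>w. (a w + b w) powr q) \<in> borel_measurable M" by measurable
    show "AE w in M. norm ((a w + b w) powr q) \<le> norm (2 powr q * (a w powr q + b w powr q))"
      using powr_sum_bound[OF nn(1) nn(2)] q by (auto intro!: AE_I2)
  qed
  define P where "P = (\<integral>w. (a w + b w) powr q \<partial>M)"
  have P0: "P \<ge> 0" unfolding P_def using nn by auto
  have split: "(a w + b w) powr q = (a w powr q) powr (1/q) * ((a w + b w) powr q) powr (1 - 1/q)
      + (b w powr q) powr (1/q) * ((a w + b w) powr q) powr (1 - 1/q)" for w
  proof (cases "a w + b w = 0")
    case True then show ?thesis by simp
  next
    case False
    then have pos: "a w + b w > 0" using nn[of w] by simp
    have e1: "(a w powr q) powr (1/q) = a w" using nn[of w] q by (simp add: powr_powr)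
    have e2: "(b w powr q) powr (1/q) = b w" using nn[of w] q by (simp add: powr_powr)
    have e3: "((a w + b w) powr q) powr (1 - 1/q) = (a w + b w) powr (q - 1)"
      using q by (simp add: powr_powr algebra_simps)
    have "(a w + b w) powr q = (a w + b w) * (a w + b w) powr (q - 1)"
      using pos by (simp add: powr_mult_base)
    then show ?thesis unfolding e1 e2 e3 by (simp add: algebra_simps)
  qed
  have q1: "0 < 1/q" "1/q < 1" using q by auto
  note H1 = holder_int[of "\<lambda>w. a w powr q" M "\<lambda>w. (a w + b w) powr q" "1/q", OF _ _ _ _ ia iab q1]
  note H2 = holder_int[of "\<lambda>w. b w powr q" M "\<lambda>w. (a w + b w) powr q" "1/q", OF _ _ _ _ ib iab q1]
  have "P = (\<integral>w. (a w powr q) powr (1/q) * ((a w + b w) powr q) powr (1 - 1/q)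
      + (b w powr q) powr (1/q) * ((a w + b w) powr q) powr (1 - 1/q) \<partial>M)"
    unfolding P_def by (rule Bochner_Integration.integral_cong[OF refl split])
  also have "\<dots> = (\<integral>w. (a w powr q) powr (1/q) * ((a w + b w) powr q) powr (1 - 1/q) \<partial>M)
      + (\<integral>w. (b w powr q) powr (1/q) * ((a w + b w) powr q) powr (1 - 1/q) \<partial>M)"
    by (rule Bochner_Integration.integral_add) (use H1 H2 in auto)
  also have "\<dots> \<le> (\<integral>w. a w powr q \<partial>M) powr (1/q) * P powr (1 - 1/q) + (\<integral>w. b w powr q \<partial>M) powr (1/q) * P powr (1 - 1/q)"
    unfolding P_def by (intro add_mono H1(2) H2(2)) auto
  finally have PP: "P \<le> ((\<integral>w. a w powr q \<partial>M) powr (1/q) + (\<integral>w. b w powr q \<partial>M) powr (1/q)) * P powr (1 - 1/q)"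
    by (simp add: algebra_simps)
  show "(\<integral>w. (a w + b w) powr q \<partial>M) powr (1/q) \<le> (\<integral>w. a w powr q \<partial>M) powr (1/q) + (\<integral>w. b w powr q \<partial>M) powr (1/q)"
  proof (cases "P = 0")
    case True then show ?thesis unfolding P_def by simp
  next
    case False
    then have Pp: "P > 0" using P0 by simp
    have "P = P powr (1/q) * P powr (1 - 1/q)" using Pp by (simp add: powr_add[symmetric])
    then have "P powr (1/q) * P powr (1 - 1/q) \<le> ((\<integral>w. a w powr q \<partial>M) powr (1/q) + (\<integral>w. b w powr q \<partial>M) powr (1/q)) * P powr (1 - 1/q)"
      using PP by simp
    then show ?thesis unfolding P_def[symmetric] using Pp by (simp add: mult_le_cancel_right)
  qed
qed

lemma holder_rem:
  fixes c b :: "'a \<Rightarrow> real" and q :: real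
  assumes [measurable]: "c \<in> borel_measurable M" "b \<in> borel_measurable M"
    and nn: "\<And>w. c w \<ge> 0" "\<And>w. b w \<ge> 0"
    and ic: "integrable M (\<lambda>w. c w powr q)" and ib: "integrable M (\<lambda>w. b w powr q)"
    and q: "q \<ge> 2" and pos: "(\<integral>w. c w powr q \<partial>M) > 0"
  shows "integrable M (\<lambda>w. c w powr (q-2) * (b w)^2)"
    "(\<integral>w. c w powr (q-2) * (b w)^2 \<partial>M) \<le> (\<integral>w. c w powr q \<partial>M) powr ((q-2)/q) * (\<integral>w. b w powr q \<partial>M) powr (2/q)"
proof -
  have b2: "(b w)^2 = b w powr 2" for w using nn(2)[of w]
    by (cases "b w = 0") (auto simp: powr_realpow)
  have "integrable M (\<lambda>w. c w powr (q-2) * (b w)^2) \<and>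
    (\<integral>w. c w powr (q-2) * (b w)^2 \<partial>M) \<le> (\<integral>w. c w powr q \<partial>M) powr ((q-2)/q) * (\<integral>w. b w powr q \<partial>M) powr (2/q)"
  proof (cases "q = 2")
    case True
    have i2: "integrable M (\<lambda>w. (b w)^2)" using ib True b2 by simp
    have int: "integrable M (\<lambda>w. c w powr (q-2) * (b w)^2)"
    proof (rule Bochner_Integration.integrable_bound[OF i2])
      show "(\<lambda>w. c w powr (q-2) * (b w)^2) \<in> borel_measurable M" by measurable
      show "AE w in M. norm (c w powr (q-2) * (b w)^2) \<le> norm ((b w)^2)"
        using True by (auto intro!: AE_I2)
    qed
    have "(\<integral>w. c w powr (q-2) * (b w)^2 \<partial>M) \<le> (\<integral>w. (b w)^2 \<partial>M)"
      using True by (intro integral_mono int i2) auto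
    also have "\<dots> = (\<integral>w. c w powr q \<partial>M) powr ((q-2)/q) * (\<integral>w. b w powr q \<partial>M) powr (2/q)"
      using True pos b2 by simp
    finally show ?thesis using int by simp
  next
    case False
    then have q3: "q > 2" using q by simp
    have al: "0 < (q-2)/q" "(q-2)/q < 1" using q3 by auto
    note H = holder_int[of "\<lambda>w. c w powr q" M "\<lambda>w. b w powr q" "(q-2)/q", OF _ _ _ _ ic ib al]
    have e: "(c w powr q) powr ((q-2)/q) * (b w powr q) powr (2/q) = c w powr (q-2) * (b w)^2" for w
      using q3 nn[of w] b2[of w] by (simp add: powr_powr)
    have e2: "1 - (q-2)/q = 2/q" using q3 by (simp add: field_simps)
    show ?thesis using H unfolding e2 e by auto
  qed
  then show "integrable M (\<lambda>w. c w powr (q-2) * (b w)^2)"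
    "(\<integral>w. c w powr (q-2) * (b w)^2 \<partial>M) \<le> (\<integral>w. c w powr q \<partial>M) powr ((q-2)/q) * (\<integral>w. b w powr q \<partial>M) powr (2/q)"
    by auto
qed

lemma tangent_powr:
  fixes x c p :: real
  assumes "x \<ge> 0" "c > 0" "0 < p" "p \<le> 1"
  shows "x powr p \<le> c powr p + p * c powr (p - 1) * (x - c)"
proof (cases "p = 1")
  case True then show ?thesis using assms by simp
next
  case False
  then have p1: "p < 1" using assms by simp
  have "x powr p * c powr (1 - p) \<le> p * x + (1 - p) * c"
    using young_plain[OF assms(1) _ assms(3) p1, of c] assms by simp
  then have "x powr p * c powr (1 - p) * c powr (p - 1) \<le> (p * x + (1 - p) * c) * c powr (p - 1)"
    using assms by (intro mult_right_mono) auto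
  moreover have "x powr p * c powr (1 - p) * c powr (p - 1) = x powr p"
    using assms by (simp add: mult.assoc powr_add[symmetric])
  moreover have "(p * x + (1 - p) * c) * c powr (p - 1) = c powr p + p * c powr (p - 1) * (x - c)"
  proof -
    have "c * c powr (p - 1) = c powr p" using assms by (simp add: powr_mult_base)
    then show ?thesis by (simp add: algebra_simps)
  qed
  ultimately show ?thesis by simp
qed



lemma concave_sd:
  fixes \<psi> :: "real \<Rightarrow> real"
  assumes cont: "continuous_on {0..1} \<psi>"
    and sd: "\<And>t \<epsilon>. 0 < t \<Longrightarrow> t < 1 \<Longrightarrow> \<epsilon> > 0 \<Longrightarrow>
        \<exists>\<delta>>0. \<forall>h. 0 < h \<and> h < \<delta> \<longrightarrow> \<psi> (t+h) + \<psi> (t-h) - 2 * \<psi> t \<le> \<epsilon> * h^2"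
    and c: "0 < c" "c < 1"
  shows "(1-c) * \<psi> 0 + c * \<psi> 1 \<le> \<psi> c"
proof (rule ccontr)
  assume neg: "\<not> ?thesis"
  define D where "D = (1-c) * \<psi> 0 + c * \<psi> 1 - \<psi> c"
  have D: "D > 0" using neg unfolding D_def by simp
  define E where "E t = \<psi> t - ((1-t) * \<psi> 0 + t * \<psi> 1) + D * t * (1-t)" for t
  have contE: "continuous_on {0..1} E" unfolding E_def by (intro continuous_intros cont)
  obtain t0 where t0: "t0 \<in> {0..1}" "\<And>t. t \<in> {0..1} \<Longrightarrow> E t0 \<le> E t"
    using continuous_attains_inf[OF compact_Icc _ contE] by auto
  have "c * (1 - c) \<le> c * 1" using c by (intro mult_left_mono) auto
  then have c1: "c * (1 - c) < 1" using c by linarith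
  have "D * (c * (1 - c)) < D" using D c1 by simp
  moreover have "E c = - D + D * (c * (1 - c))" unfolding E_def D_def by (simp add: algebra_simps)
  ultimately have "E c < 0" by simp
  then have Et0: "E t0 < 0" using t0(2)[of c] c by simp
  have "t0 \<noteq> 0" "t0 \<noteq> 1" using Et0 unfolding E_def by auto
  then have t01: "0 < t0" "t0 < 1" using t0(1) by auto
  obtain \<delta> where \<delta>: "\<delta> > 0" "\<And>h. 0 < h \<Longrightarrow> h < \<delta> \<Longrightarrow> \<psi> (t0+h) + \<psi> (t0-h) - 2 * \<psi> t0 \<le> D * h^2"
    using sd[OF t01 D] by blast
  define h where "h = min \<delta> (min t0 (1 - t0)) / 2"
  have h: "0 < h" "h < \<delta>" "h \<le> t0" "h \<le> 1 - t0" unfolding h_def using \<delta> t01 by auto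
  have "E t0 \<le> E (t0 + h)" "E t0 \<le> E (t0 - h)" using t0(2) h t01 by auto
  then have "0 \<le> E (t0 + h) + E (t0 - h) - 2 * E t0" by simp
  also have "E (t0 + h) + E (t0 - h) - 2 * E t0 = \<psi> (t0+h) + \<psi> (t0-h) - 2 * \<psi> t0 - 2 * D * h^2"
    unfolding E_def by (simp add: algebra_simps power2_eq_square)
  finally have "2 * D * h^2 \<le> D * h^2" using \<delta>(2)[OF h(1) h(2)] by simp
  then show False using D h(1) by (simp add: mult_le_cancel_right)
qed



lemma vec_nth_meas[measurable (raw)]:
  "f \<in> borel_measurable M \<Longrightarrow> (\<lambda>w. (f w :: real^'d) $ i) \<in> borel_measurable M"
proof -
  have "(\<lambda>x::real^'d. x $ i) \<in> borel_measurable borel"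
    by (intro borel_measurable_continuous_onI continuous_intros)
  then show "f \<in> borel_measurable M \<Longrightarrow> (\<lambda>w. (f w :: real^'d) $ i) \<in> borel_measurable M"
    using measurable_compose by blast
qed

lemma snorm_meas[measurable (raw)]:
  "f \<in> borel_measurable M \<Longrightarrow> (\<lambda>w. snorm s (f w :: real^'d)) \<in> borel_measurable M"
  unfolding snorm_def by measurable

lemma eq0_sets:
  fixes U :: "'a \<Rightarrow> real^'d"
  assumes "U \<in> borel_measurable M"
  shows "{w \<in> space M. U w = 0} \<in> sets M"
proof -
  have "U -` {0} \<inter> space M \<in> sets M"
    by (rule measurable_sets[OF assms]) (simp add: borel_closed)
  moreover have "{w \<in> space M. U w = 0} = U -` {0} \<inter> space M" by auto
  ultimately show ?thesis by simp
qed

lemma powr_times_self: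
  fixes a p :: real
  assumes "a \<ge> 0"
  shows "a powr p * a = a powr (p + 1)"
proof (cases "a = 0")
  case True then show ?thesis by simp
next
  case False
  then have "a = a powr 1" using assms by simp
  then have "a powr p * a = a powr p * a powr 1" by simp
  then show ?thesis by (simp add: powr_add)
qed

context qs begin

lemma Dd_meas[measurable (raw)]:
  fixes U Y :: "'a \<Rightarrow> real^'d"
  assumes [measurable]: "U \<in> borel_measurable M" "Y \<in> borel_measurable M"
  shows "(\<lambda>w. Dd (U w) (Y w)) \<in> borel_measurable M"
  unfolding Dd_def by (rule measurable_If) (auto intro: eq0_sets)

lemma Dd_scale: "Dd x (c *\<^sub>R y) = c * Dd x y"
  unfolding Dd_def by (simp add: sum_distrib_left algebra_simps)

lemma Dd_bound: "\<bar>Dd x y\<bar> \<le> snorm s x powr (q - 1) * snorm s y"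
proof (cases "x = 0")
  case True then show ?thesis unfolding Dd_def using snorm_nonneg[of s y] by simp
next
  case False
  then have sx: "snorm s x > 0" using snorm_zero_iff[OF ev s0, of x] snorm_nonneg[of s x] by simp
  have "\<bar>Dd x y\<bar> = snorm s x powr (q - real s) * \<bar>\<Sum>j\<in>UNIV. (x$j)^(s-1) * y$j\<bar>"
    unfolding Dd_def using False by (simp add: abs_mult)
  also have "\<dots> \<le> snorm s x powr (q - real s) * (snorm s x ^ (s - 1) * snorm s y)"
    by (intro mult_left_mono holder_A_snorm[OF ev s2]) simp
  also have "snorm s x ^ (s - 1) = snorm s x powr (real s - 1)"
    using sx s2 by (simp add: powr_realpow[symmetric] of_nat_diff)
  also have "snorm s x powr (q - real s) * (snorm s x powr (real s - 1) * snorm s y) = snorm s x powr (q - 1) * snorm s y"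
    using sx by (simp add: mult.assoc[symmetric] powr_add[symmetric])
  finally show ?thesis .
qed

lemma young_q:
  fixes a b :: real
  assumes "a \<ge> 0" "b \<ge> 0"
  shows "a powr (q - 1) * b \<le> a powr q + b powr q"
proof (cases "b \<le> a")
  case True
  then have "a powr (q - 1) * b \<le> a powr (q - 1) * a" using assms by (intro mult_left_mono) auto
  also have "\<dots> = a powr q" using powr_times_self[OF assms(1), of "q - 1"] by simp
  finally show ?thesis by (meson add_increasing2 add_increasing powr_ge_zero)
next
  case False
  then have "a powr (q - 1) * b \<le> b powr (q - 1) * b" using assms q2 by (intro mult_right_mono powr_mono2) auto
  also have "\<dots> = b powr q" using powr_times_self[OF assms(2), of "q - 1"] by simp
  finally show ?thesis by (meson add_increasing2 add_increasing powr_ge_zero)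
qed

definition Gq :: "'a measure \<Rightarrow> ('a \<Rightarrow> real^'d) \<Rightarrow> real" where
  "Gq M U = (\<integral>w. snorm s (U w) powr q \<partial>M)"

definition Nq :: "'a measure \<Rightarrow> ('a \<Rightarrow> real^'d) \<Rightarrow> real" where
  "Nq M U = Gq M U powr (1/q)"

definition good :: "'a measure \<Rightarrow> ('a \<Rightarrow> real^'d) \<Rightarrow> bool" where
  "good M U \<longleftrightarrow> U \<in> borel_measurable M \<and> integrable M (\<lambda>w. snorm s (U w) powr q)"

lemma Gq_nonneg: "Gq M U \<ge> 0" unfolding Gq_def by simp

lemma Nq_nonneg: "Nq M U \<ge> 0" unfolding Nq_def by simp

lemma Lq_Nq: "Lq_norm M q (\<lambda>w. snorm s (U w)) = Nq M U"
  unfolding Lq_norm_def Nq_def Gq_def by (simp add: snorm_nonneg)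

lemma Nq_pow: "Nq M U powr q = Gq M U"
  unfolding Nq_def using q2 Gq_nonneg[of M U] by (simp add: powr_powr)

lemma Nq_sq: "(Nq M U)^2 = Gq M U powr (2/q)"
proof -
  have "1/q + 1/q = 2/q" by simp
  then show ?thesis unfolding Nq_def power2_eq_square powr_add[symmetric] by simp
qed

lemma good_scale:
  assumes "good M Y"
  shows "good M (\<lambda>w. c *\<^sub>R Y w)" "Gq M (\<lambda>w. c *\<^sub>R Y w) = \<bar>c\<bar> powr q * Gq M Y"
    "Nq M (\<lambda>w. c *\<^sub>R Y w) = \<bar>c\<bar> * Nq M Y"
proof -
  have e: "snorm s (c *\<^sub>R Y w) powr q = \<bar>c\<bar> powr q * snorm s (Y w) powr q" for w
    by (simp add: snorm_scale[OF ev s0] powr_mult snorm_nonneg)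
  show "good M (\<lambda>w. c *\<^sub>R Y w)" using assms unfolding good_def e by auto
  show g: "Gq M (\<lambda>w. c *\<^sub>R Y w) = \<bar>c\<bar> powr q * Gq M Y" unfolding Gq_def e by simp
  show "Nq M (\<lambda>w. c *\<^sub>R Y w) = \<bar>c\<bar> * Nq M Y"
    unfolding Nq_def g using q2 Gq_nonneg[of M Y] by (simp add: powr_mult powr_powr)
qed

lemma good_add:
  assumes "good M U" "good M V"
  shows "good M (\<lambda>w. U w + V w)" "Nq M (\<lambda>w. U w + V w) \<le> Nq M U + Nq M V"
proof -
  have [measurable]: "U \<in> borel_measurable M" "V \<in> borel_measurable M" using assms unfolding good_def by auto
  have iU: "integrable M (\<lambda>w. snorm s (U w) powr q)" and iV: "integrable M (\<lambda>w. snorm s (V w) powr q)"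
    using assms unfolding good_def by auto
  note MK = minkowski_int[of "\<lambda>w. snorm s (U w)" M "\<lambda>w. snorm s (V w)" q, OF _ _ snorm_nonneg snorm_nonneg iU iV]
  have q1: "q > 1" using q2 by simp
  have le: "snorm s (U w + V w) powr q \<le> (snorm s (U w) + snorm s (V w)) powr q" for w
    using snorm_minkowski[OF ev s2] q2 by (intro powr_mono2) (auto simp: snorm_nonneg)
  have iUV: "integrable M (\<lambda>w. snorm s (U w + V w) powr q)"
  proof (rule Bochner_Integration.integrable_bound)
    show "integrable M (\<lambda>w. (snorm s (U w) + snorm s (V w)) powr q)" using MK q1 by auto
    show "(\<lambda>w. snorm s (U w + V w) powr q) \<in> borel_measurable M" by measurable
    show "AE w in M. norm (snorm s (U w + V w) powr q) \<le> norm ((snorm s (U w) + snorm s (V w)) powr q)"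
      using le by (auto intro!: AE_I2)
  qed
  then show "good M (\<lambda>w. U w + V w)" unfolding good_def by auto
  have "Gq M (\<lambda>w. U w + V w) \<le> (\<integral>w. (snorm s (U w) + snorm s (V w)) powr q \<partial>M)"
    unfolding Gq_def using le MK q1 iUV by (intro integral_mono) auto
  then have "Nq M (\<lambda>w. U w + V w) \<le> (\<integral>w. (snorm s (U w) + snorm s (V w)) powr q \<partial>M) powr (1/q)"
    unfolding Nq_def using q2 Gq_nonneg by (intro powr_mono2) auto
  also have "\<dots> \<le> Nq M U + Nq M V" unfolding Nq_def Gq_def using MK q1 by auto
  finally show "Nq M (\<lambda>w. U w + V w) \<le> Nq M U + Nq M V" .
qed

lemma Dd_integrable:
  assumes "good M U" "good M Y"
  shows "integrable M (\<lambda>w. Dd (U w) (Y w))"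
proof -
  have [measurable]: "U \<in> borel_measurable M" "Y \<in> borel_measurable M" using assms unfolding good_def by auto
  show ?thesis
  proof (rule Bochner_Integration.integrable_bound)
    show "integrable M (\<lambda>w. snorm s (U w) powr q + snorm s (Y w) powr q)" using assms unfolding good_def by auto
    show "(\<lambda>w. Dd (U w) (Y w)) \<in> borel_measurable M" by measurable
    show "AE w in M. norm (Dd (U w) (Y w)) \<le> norm (snorm s (U w) powr q + snorm s (Y w) powr q)"
    proof (intro AE_I2)
      fix w
      have "\<bar>Dd (U w) (Y w)\<bar> \<le> snorm s (U w) powr q + snorm s (Y w) powr q"
        using Dd_bound young_q[OF snorm_nonneg snorm_nonneg] order_trans by blast
      then show "norm (Dd (U w) (Y w)) \<le> norm (snorm s (U w) powr q + snorm s (Y w) powr q)" by simp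
    qed
  qed
qed

lemma zero_case:
  assumes "good M U" "good M Y" "Nq M U = 0"
  shows "Nq M (\<lambda>w. U w + h *\<^sub>R Y w) = \<bar>h\<bar> * Nq M Y"
proof -
  have "Gq M U = 0" using assms(3) unfolding Nq_def by simp
  then have "AE w in M. snorm s (U w) powr q = 0"
    using integral_nonneg_eq_0_iff_AE[of M "\<lambda>w. snorm s (U w) powr q"] assms(1) unfolding good_def Gq_def by simp
  then have "AE w in M. U w = 0" by (auto elim!: AE_mp simp: snorm_zero_iff[OF ev s0])
  then have "Gq M (\<lambda>w. U w + h *\<^sub>R Y w) = Gq M (\<lambda>w. h *\<^sub>R Y w)"
    unfolding Gq_def by (intro integral_cong_AE) (use assms in \<open>auto simp: good_def elim!: AE_mp\<close>)
  then have "Nq M (\<lambda>w. U w + h *\<^sub>R Y w) = Nq M (\<lambda>w. h *\<^sub>R Y w)" unfolding Nq_def by simp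
  then show ?thesis using good_scale(3)[OF assms(2)] by simp
qed

end


context qs begin

lemma step:
  assumes gU: "good M U" and gY: "good M Y" and NU: "Nq M U > 0"
  shows "(Nq M (\<lambda>w. U w + h *\<^sub>R Y w))^2 \<le> (Nq M U)^2
     + 2 * h * (Nq M U powr (2 - q) * (\<integral>w. Dd (U w) (Y w) \<partial>M))
     + (mm - 1) * h^2 * (Nq M Y)^2 * (Nq M U powr (2 - q) * (Nq M U + \<bar>h\<bar> * Nq M Y) powr (q - 2))"
proof -
  have mU[measurable]: "U \<in> borel_measurable M" and mY[measurable]: "Y \<in> borel_measurable M" using gU gY unfolding good_def by auto
  have iU: "integrable M (\<lambda>w. snorm s (U w) powr q)" and iY: "integrable M (\<lambda>w. snorm s (Y w) powr q)"
    using gU gY unfolding good_def by auto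
  have q1: "q > 1" using q2 by simp
  define c where "c w = snorm s (U w) + \<bar>h\<bar> * snorm s (Y w)" for w
  have cm[measurable]: "c \<in> borel_measurable M" unfolding c_def by measurable
  have c0: "c w \<ge> 0" for w unfolding c_def by (simp add: snorm_nonneg)
  have ihY: "integrable M (\<lambda>w. (\<bar>h\<bar> * snorm s (Y w)) powr q)"
    using iY by (simp add: powr_mult snorm_nonneg)
  have m1: "(\<lambda>w. snorm s (U w)) \<in> borel_measurable M" using mU by (rule snorm_meas)
  have ym: "(\<lambda>w. snorm s (Y w)) \<in> borel_measurable M" using mY by (rule snorm_meas)
  have m2: "(\<lambda>w. \<bar>h\<bar> * snorm s (Y w)) \<in> borel_measurable M" using ym by (rule borel_measurable_times[OF borel_measurable_const])
  have n2: "\<And>w. 0 \<le> \<bar>h\<bar> * snorm s (Y w)" by (simp add: snorm_nonneg)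
  note MK = minkowski_int[of "\<lambda>w. snorm s (U w)" M "\<lambda>w. \<bar>h\<bar> * snorm s (Y w)" q, OF m1 m2 snorm_nonneg n2 iU ihY q1]
  have ic: "integrable M (\<lambda>w. c w powr q)" unfolding c_def using MK by (simp add: snorm_nonneg)
  define G0 where "G0 = Gq M U"
  have G0p: "G0 > 0" using NU Gq_nonneg[of M U] unfolding G0_def Nq_def
    by (cases "Gq M U = 0") auto
  have cpos: "(\<integral>w. c w powr q \<partial>M) > 0"
  proof -
    have "G0 \<le> (\<integral>w. c w powr q \<partial>M)" unfolding G0_def Gq_def
      using iU ic by (intro integral_mono) (auto simp: c_def snorm_nonneg intro!: powr_mono2 q1 less_imp_le[OF q1[THEN order.strict_trans[OF zero_less_one]]])
    then show ?thesis using G0p by simp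
  qed
  note HR = holder_rem[of c M "\<lambda>w. snorm s (Y w)" q, OF cm ym c0 snorm_nonneg ic iY q2 cpos]
  define E where "E = (\<integral>w. Dd (U w) (Y w) \<partial>M)"
  define R where "R = (\<integral>w. c w powr (q-2) * (snorm s (Y w))^2 \<partial>M)"
  define K where "K = (Nq M U + \<bar>h\<bar> * Nq M Y) powr (q - 2) * (Nq M Y)^2"
  have iD: "integrable M (\<lambda>w. Dd (U w) (Y w))" by (rule Dd_integrable[OF gU gY])
  have pw: "snorm s (U w + h *\<^sub>R Y w) powr q \<le> snorm s (U w) powr q + q * h * Dd (U w) (Y w)
      + q * (mm - 1) / 2 * h^2 * (c w powr (q-2) * (snorm s (Y w))^2)" for w
  proof -
    have "snorm s (U w + h *\<^sub>R Y w) powr q \<le> snorm s (U w) powr q + q * Dd (U w) (h *\<^sub>R Y w)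
     + q*(mm-1)/2 * (snorm s (U w) + snorm s (h *\<^sub>R Y w)) powr (q-2) * (snorm s (h *\<^sub>R Y w))^2"
      by (rule pointwise)
    also have "snorm s (h *\<^sub>R Y w) = \<bar>h\<bar> * snorm s (Y w)" by (simp add: snorm_scale[OF ev s0])
    also have "Dd (U w) (h *\<^sub>R Y w) = h * Dd (U w) (Y w)" by (rule Dd_scale)
    finally show ?thesis unfolding c_def by (simp add: power_mult_distrib algebra_simps)
  qed
  define G where "G = Gq M (\<lambda>w. U w + h *\<^sub>R Y w)"
  have G0': "G \<ge> 0" unfolding G_def by (rule Gq_nonneg)
  have GG: "G \<le> G0 + q * h * E + q * (mm - 1) / 2 * h^2 * R"
  proof -
    have gUY: "good M (\<lambda>w. U w + h *\<^sub>R Y w)" by (intro good_add good_scale gU gY)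
    have "G \<le> (\<integral>w. snorm s (U w) powr q + q * h * Dd (U w) (Y w)
      + q * (mm - 1) / 2 * h^2 * (c w powr (q-2) * (snorm s (Y w))^2) \<partial>M)"
      unfolding G_def Gq_def using gUY HR(1) iU iD pw unfolding good_def by (intro integral_mono) auto
    also have "\<dots> = G0 + q * h * E + q * (mm - 1) / 2 * h^2 * R"
      unfolding G0_def Gq_def E_def R_def using HR(1) iU iD by simp
    finally show ?thesis .
  qed
  have RK: "R \<le> K"
  proof -
    have "R \<le> (\<integral>w. c w powr q \<partial>M) powr ((q-2)/q) * (\<integral>w. snorm s (Y w) powr q \<partial>M) powr (2/q)"
      unfolding R_def by (rule HR(2))
    also have "(\<integral>w. snorm s (Y w) powr q \<partial>M) powr (2/q) = (Nq M Y)^2"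
      unfolding Nq_sq Gq_def ..
    also have "(\<integral>w. c w powr q \<partial>M) powr ((q-2)/q) \<le> (Nq M U + \<bar>h\<bar> * Nq M Y) powr (q - 2)"
    proof -
      have "(\<integral>w. c w powr q \<partial>M) powr (1/q) \<le> Nq M U + (\<integral>w. (\<bar>h\<bar> * snorm s (Y w)) powr q \<partial>M) powr (1/q)"
        using MK(2) unfolding c_def Nq_def Gq_def .
      also have "(\<integral>w. (\<bar>h\<bar> * snorm s (Y w)) powr q \<partial>M) powr (1/q) = \<bar>h\<bar> * Nq M Y"
        using good_scale(3)[OF gY, of h] unfolding Nq_def Gq_def by (simp add: snorm_scale[OF ev s0])
      finally have b1: "(\<integral>w. c w powr q \<partial>M) powr (1/q) \<le> Nq M U + \<bar>h\<bar> * Nq M Y" .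
      have "(\<integral>w. c w powr q \<partial>M) powr ((q-2)/q) = ((\<integral>w. c w powr q \<partial>M) powr (1/q)) powr (q - 2)"
        by (simp add: powr_powr)
      also have "\<dots> \<le> (Nq M U + \<bar>h\<bar> * Nq M Y) powr (q - 2)"
        using b1 q2 by (intro powr_mono2) auto
      finally show ?thesis .
    qed
    then have "(\<integral>w. c w powr q \<partial>M) powr ((q-2)/q) * (Nq M Y)^2 \<le> (Nq M U + \<bar>h\<bar> * Nq M Y) powr (q - 2) * (Nq M Y)^2"
      by (simp add: mult_right_mono)
    finally show ?thesis unfolding K_def .
  qed
  define \<Delta> where "\<Delta> = q * h * E + q * (mm - 1) / 2 * h^2 * K"
  have GD: "G - G0 \<le> \<Delta>"
  proof -
    have "q * (mm - 1) / 2 * h^2 * R \<le> q * (mm - 1) / 2 * h^2 * K"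
      using RK q2 mm2 by (intro mult_left_mono) auto
    then show ?thesis using GG unfolding \<Delta>_def by linarith
  qed
  have p: "0 < 2/q" "2/q \<le> 1" using q2 by auto
  have "G powr (2/q) \<le> G0 powr (2/q) + 2/q * G0 powr (2/q - 1) * (G - G0)"
    by (rule tangent_powr[OF G0' G0p p])
  also have "\<dots> \<le> G0 powr (2/q) + 2/q * G0 powr (2/q - 1) * \<Delta>"
    using GD q2 by (intro add_left_mono mult_left_mono) auto
  finally have T: "G powr (2/q) \<le> G0 powr (2/q) + 2/q * G0 powr (2/q - 1) * \<Delta>" .
  have e1: "G0 powr (2/q - 1) = Nq M U powr (2 - q)"
  proof -
    have "Nq M U powr (2 - q) = G0 powr ((2 - q) / q)" unfolding Nq_def G0_def by (simp add: powr_powr)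
    also have "(2 - q) / q = 2/q - 1" using q2 by (simp add: field_simps)
    finally show ?thesis by simp
  qed
  have "(Nq M (\<lambda>w. U w + h *\<^sub>R Y w))^2 = G powr (2/q)" unfolding G_def Nq_sq ..
  also have "(Nq M U)^2 = G0 powr (2/q)" unfolding G0_def Nq_sq ..
  moreover have "2/q * G0 powr (2/q - 1) * \<Delta> = 2 * h * (Nq M U powr (2 - q) * E)
     + (mm - 1) * h^2 * (Nq M Y)^2 * (Nq M U powr (2 - q) * (Nq M U + \<bar>h\<bar> * Nq M Y) powr (q - 2))"
    unfolding e1 \<Delta>_def K_def using q2 by (simp add: field_simps)
  ultimately show ?thesis using T unfolding E_def by simp
qed

end


context qs begin

lemma rho_lim:
  assumes NU: "NU > (0::real)"
  shows "((\<lambda>h. NU powr (2 - q) * (NU + \<bar>h\<bar> * NY) powr (q - 2)) \<longlongrightarrow> 1) (at_right 0)"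
proof -
  have "((\<lambda>h::real. NU + \<bar>h\<bar> * NY) \<longlongrightarrow> NU + \<bar>0\<bar> * NY) (at_right 0)"
    by (intro tendsto_intros tendsto_ident_at)
  then have "((\<lambda>h::real. NU powr (2 - q) * (NU + \<bar>h\<bar> * NY) powr (q - 2)) \<longlongrightarrow> NU powr (2 - q) * NU powr (q - 2)) (at_right 0)"
    using NU by (intro tendsto_intros tendsto_powr) auto
  moreover have "NU powr (2 - q) * NU powr (q - 2) = 1" using NU by (simp add: powr_add[symmetric])
  ultimately show ?thesis by simp
qed

lemma main_ineq:
  assumes gX: "good M X" and gY: "good M Y"
  shows "(Nq M (\<lambda>w. X w + Y w))^2 \<le> (Nq M X)^2
     + (if Nq M X = 0 then 0 else 2 * Nq M X powr (2 - q) * (\<integral>w. Dd (X w) (Y w) \<partial>M))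
     + (mm - 1) * (Nq M Y)^2"
proof -
  define NY where "NY = Nq M Y"
  define K where "K = (mm - 1) * NY^2"
  have NY0: "NY \<ge> 0" unfolding NY_def by (rule Nq_nonneg)
  have K0: "K \<ge> NY^2" unfolding K_def using mm2 NY0 by (simp add: mult_right_mono[of 1 "mm - 1" "NY^2", simplified])
  define Xt where "Xt t = (\<lambda>w. X w + t *\<^sub>R Y w)" for t
  define \<phi> where "\<phi> t = (Nq M (Xt t))^2" for t
  define \<psi> where "\<psi> t = \<phi> t - K * t^2" for t
  have gXt: "good M (Xt t)" for t unfolding Xt_def by (intro good_add(1) good_scale(1) gX gY)
  have shift: "Xt (t + h) = (\<lambda>w. Xt t w + h *\<^sub>R Y w)" for t h
    unfolding Xt_def by (auto simp: scaleR_add_left algebra_simps)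
  have X1: "Xt 1 = (\<lambda>w. X w + Y w)" unfolding Xt_def by simp
  have X0: "Xt 0 = X" unfolding Xt_def by simp
  show ?thesis
  proof (cases "Nq M X = 0")
    case True
    have "Nq M (\<lambda>w. X w + 1 *\<^sub>R Y w) = \<bar>1\<bar> * Nq M Y" by (rule zero_case[OF gX gY True])
    then have "(Nq M (\<lambda>w. X w + Y w))^2 = NY^2" unfolding NY_def by simp
    then show ?thesis using True K0 unfolding K_def NY_def by simp
  next
    case False
    then have N0: "Nq M X > 0" using Nq_nonneg[of M X] by simp
    have lip: "\<bar>Nq M (Xt t') - Nq M (Xt t)\<bar> \<le> NY * \<bar>t' - t\<bar>" for t t'
    proof -
      have a: "Nq M (Xt b) \<le> Nq M (Xt a) + NY * \<bar>b - a\<bar>" for a b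
      proof -
        have "Xt b = Xt (a + (b - a))" by simp
        also have "\<dots> = (\<lambda>w. Xt a w + (b - a) *\<^sub>R Y w)" by (rule shift)
        finally have "Nq M (Xt b) = Nq M (\<lambda>w. Xt a w + (b - a) *\<^sub>R Y w)" by simp
        also have "\<dots> \<le> Nq M (Xt a) + Nq M (\<lambda>w. (b - a) *\<^sub>R Y w)"
          by (intro good_add(2) gXt good_scale(1) gY)
        also have "Nq M (\<lambda>w. (b - a) *\<^sub>R Y w) = NY * \<bar>b - a\<bar>"
          unfolding NY_def using good_scale(3)[OF gY] by simp
        finally show ?thesis .
      qed
      show ?thesis using a[of t t'] a[of t' t] by (simp add: abs_minus_commute abs_le_iff)
    qed
    have contN: "continuous_on {0..1} (\<lambda>t. Nq M (Xt t))"
    proof (rule lipschitz_on_continuous_on)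
      show "NY-lipschitz_on {0..1} (\<lambda>t. Nq M (Xt t))"
        by (rule lipschitz_onI) (use lip NY0 in \<open>auto simp: dist_real_def mult.commute\<close>)
    qed
    have cont: "continuous_on {0..1} \<psi>"
      unfolding \<psi>_def \<phi>_def by (intro continuous_intros contN)
    have sd: "\<exists>\<delta>>0. \<forall>h. 0 < h \<and> h < \<delta> \<longrightarrow> \<psi> (t+h) + \<psi> (t-h) - 2 * \<psi> t \<le> \<epsilon> * h^2"
      if t: "0 < t" "t < 1" and eps: "\<epsilon> > 0" for t \<epsilon>
    proof -
      define U where "U = Xt t"
      have gU: "good M U" unfolding U_def by (rule gXt)
      have sp: "Xt (t + h) = (\<lambda>w. U w + h *\<^sub>R Y w)" for h unfolding U_def by (rule shift)
      have sm: "Xt (t - h) = (\<lambda>w. U w + (-h) *\<^sub>R Y w)" for h using shift[of t "-h"] unfolding U_def by simp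
      have quad: "K * (t+h)^2 + K * (t-h)^2 - 2 * (K * t^2) = 2 * K * h^2" for h
        by (simp add: algebra_simps power2_eq_square)
      show ?thesis
      proof (cases "Nq M U = 0")
        case True
        have "\<psi> (t+h) + \<psi> (t-h) - 2 * \<psi> t \<le> \<epsilon> * h^2" if h: "h > 0" for h
        proof -
          have "\<phi> (t+h) = h^2 * NY^2" unfolding \<phi>_def sp zero_case[OF gU gY True] NY_def
            by (simp add: power_mult_distrib)
          moreover have "\<phi> (t-h) = h^2 * NY^2" unfolding \<phi>_def sm zero_case[OF gU gY True] NY_def
            by (simp add: power_mult_distrib)
          moreover have "\<phi> t = 0" unfolding \<phi>_def U_def[symmetric] True by simp
          ultimately have "\<psi> (t+h) + \<psi> (t-h) - 2 * \<psi> t = 2 * h^2 * NY^2 - 2 * K * h^2"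
            unfolding \<psi>_def using quad[of h] by (simp add: algebra_simps)
          also have "\<dots> \<le> 0" using mult_right_mono[OF K0, of "h^2"] by (simp add: mult.commute)
          also have "0 \<le> \<epsilon> * h^2" using eps by simp
          finally show ?thesis .
        qed
        then show ?thesis by (intro exI[of _ 1]) auto
      next
        case False
        then have NU: "Nq M U > 0" using Nq_nonneg[of M U] by simp
        define E where "E = (\<integral>w. Dd (U w) (Y w) \<partial>M)"
        define \<rho> where "\<rho> h = Nq M U powr (2 - q) * (Nq M U + \<bar>h\<bar> * NY) powr (q - 2)" for h
        have "((\<lambda>h. 2 * (mm - 1) * NY^2 * (\<rho> h - 1)) \<longlongrightarrow> 2 * (mm - 1) * NY^2 * (1 - 1)) (at_right 0)"
          unfolding \<rho>_def by (intro tendsto_intros rho_lim NU)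
        then have "eventually (\<lambda>h. 2 * (mm - 1) * NY^2 * (\<rho> h - 1) < \<epsilon>) (at_right 0)"
          using eps by (intro order_tendstoD(2)) auto
        then obtain b where b: "b > 0" "\<And>h. h > 0 \<Longrightarrow> h < b \<Longrightarrow> 2 * (mm - 1) * NY^2 * (\<rho> h - 1) < \<epsilon>"
          unfolding eventually_at_right_field by auto
        have "\<psi> (t+h) + \<psi> (t-h) - 2 * \<psi> t \<le> \<epsilon> * h^2" if h: "h > 0" "h < b" for h
        proof -
          have s1: "\<phi> (t+h) \<le> (Nq M U)^2 + 2 * h * (Nq M U powr (2 - q) * E) + (mm - 1) * h^2 * NY^2 * \<rho> h"
            unfolding \<phi>_def sp E_def \<rho>_def NY_def by (rule step[OF gU gY NU])
          have s2: "\<phi> (t-h) \<le> (Nq M U)^2 + 2 * (-h) * (Nq M U powr (2 - q) * E) + (mm - 1) * (-h)^2 * NY^2 * \<rho> h"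
          proof -
            have "\<rho> (-h) = \<rho> h" unfolding \<rho>_def by simp
            then show ?thesis unfolding \<phi>_def sm E_def using step[OF gU gY NU, of "-h"] unfolding \<rho>_def NY_def by simp
          qed
          have "\<phi> t = (Nq M U)^2" unfolding \<phi>_def U_def ..
          then have "\<psi> (t+h) + \<psi> (t-h) - 2 * \<psi> t \<le> 2 * (mm - 1) * h^2 * NY^2 * \<rho> h - 2 * K * h^2"
            unfolding \<psi>_def using s1 s2 quad[of h] by (simp add: algebra_simps)
          also have "\<dots> = h^2 * (2 * (mm - 1) * NY^2 * (\<rho> h - 1))" unfolding K_def by (simp add: algebra_simps)
          also have "\<dots> \<le> h^2 * \<epsilon>" using b(2)[OF h] by (intro mult_left_mono) auto
          finally show ?thesis by (simp add: mult.commute)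
        qed
        then show ?thesis using b(1) by blast
      qed
    qed
    have conc: "(1-c) * \<psi> 0 + c * \<psi> 1 \<le> \<psi> c" if "0 < c" "c < 1" for c
      by (rule concave_sd[OF cont sd that])
    define E0 where "E0 = (\<integral>w. Dd (X w) (Y w) \<partial>M)"
    define \<rho> where "\<rho> h = Nq M X powr (2 - q) * (Nq M X + \<bar>h\<bar> * NY) powr (q - 2)" for h
    define F where "F h = 2 * (Nq M X powr (2 - q) * E0) + (mm - 1) * NY^2 * (h * (\<rho> h - 1))" for h
    have FL: "(F \<longlongrightarrow> 2 * (Nq M X powr (2 - q) * E0) + (mm - 1) * NY^2 * (0 * (1 - 1))) (at_right 0)"
      unfolding F_def \<rho>_def by (intro tendsto_intros tendsto_ident_at rho_lim N0)
    have evF: "eventually (\<lambda>h. \<psi> 1 - \<psi> 0 \<le> F h) (at_right 0)"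
    proof -
      have "\<psi> 1 - \<psi> 0 \<le> F h" if h: "0 < h" "h < 1" for h
      proof -
        have "\<phi> h \<le> (Nq M X)^2 + 2 * h * (Nq M X powr (2 - q) * E0) + (mm - 1) * h^2 * NY^2 * \<rho> h"
        proof -
          have "Xt h = (\<lambda>w. X w + h *\<^sub>R Y w)" unfolding Xt_def ..
          then show ?thesis unfolding \<phi>_def E0_def \<rho>_def NY_def using step[OF gX gY N0, of h] by simp
        qed
        moreover have "\<phi> 0 = (Nq M X)^2" unfolding \<phi>_def X0 ..
        ultimately have "\<psi> h - \<psi> 0 \<le> h * F h"
          unfolding \<psi>_def F_def K_def by (simp add: algebra_simps power2_eq_square)
        moreover have "h * (\<psi> 1 - \<psi> 0) \<le> \<psi> h - \<psi> 0" using conc[OF h] by (simp add: algebra_simps)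
        ultimately have "h * (\<psi> 1 - \<psi> 0) \<le> h * F h" by linarith
        then show ?thesis using h(1) by simp
      qed
      then show ?thesis using eventually_at_right_real[of 0 1] by (auto elim!: eventually_mono)
    qed
    have "\<psi> 1 - \<psi> 0 \<le> 2 * (Nq M X powr (2 - q) * E0) + (mm - 1) * NY^2 * (0 * (1 - 1))"
      by (rule tendsto_le[OF trivial_limit_at_right_real FL tendsto_const evF])
    then have "\<phi> 1 \<le> \<phi> 0 + 2 * (Nq M X powr (2 - q) * E0) + K" unfolding \<psi>_def by simp
    moreover have "\<phi> 1 = (Nq M (\<lambda>w. X w + Y w))^2" unfolding \<phi>_def X1 ..
    moreover have "\<phi> 0 = (Nq M X)^2" unfolding \<phi>_def X0 ..
    ultimately show ?thesis using False unfolding K_def NY_def E0_def by (simp add: mult.assoc)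
  qed
qed

end


context qs begin

lemma hj_bound:
  fixes x y :: "real^'d"
  shows "\<bar>(if x = 0 then 0 else snorm s x powr (q - real s) * (x $ j)^(s-1)) * y $ j\<bar> \<le> snorm s x powr (q - 1) * snorm s y"
proof (cases "x = 0")
  case True then show ?thesis by (simp add: snorm_nonneg)
next
  case False
  then have sx: "snorm s x > 0" using snorm_zero_iff[OF ev s0, of x] snorm_nonneg[of s x] by simp
  have "\<bar>(if x = 0 then 0 else snorm s x powr (q - real s) * (x $ j)^(s-1)) * y $ j\<bar>
      = snorm s x powr (q - real s) * (\<bar>x $ j\<bar>^(s-1) * \<bar>y $ j\<bar>)"
    using False by (simp add: abs_mult power_abs)
  also have "\<dots> \<le> snorm s x powr (q - real s) * (snorm s x ^ (s-1) * snorm s y)"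
    by (intro mult_left_mono mult_mono power_mono comp_le_snorm[OF ev s0]) (auto simp: snorm_nonneg)
  also have "snorm s x ^ (s - 1) = snorm s x powr (real s - 1)"
    using sx s2 by (simp add: powr_realpow[symmetric] of_nat_diff)
  also have "snorm s x powr (q - real s) * (snorm s x powr (real s - 1) * snorm s y) = snorm s x powr (q - 1) * snorm s y"
    using sx by (simp add: mult.assoc[symmetric] powr_add[symmetric])
  finally show ?thesis .
qed

lemma ce_zero:
  fixes X Y :: "'a \<Rightarrow> real^'d"
  assumes P: "prob_space M" and gX: "good M X" and gY: "good M Y"
    and ce: "\<forall>j. AE \<omega> in M. real_cond_exp M (vimage_algebra (space M) X borel) (\<lambda>\<omega>. Y \<omega> $ j) \<omega> = 0"
  shows "(\<integral>w. Dd (X w) (Y w) \<partial>M) = 0"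
proof -
  have mX[measurable]: "X \<in> borel_measurable M" and mY[measurable]: "Y \<in> borel_measurable M"
    using gX gY unfolding good_def by auto
  define F where "F = vimage_algebra (space M) X borel"
  have sub: "subalgebra M F"
    unfolding subalgebra_def F_def
  proof
    have "sets (vimage_algebra (space M) X borel) = {X -` A \<inter> space M | A. A \<in> sets borel}"
      by (rule sets_vimage_algebra2) simp
    then show "sets (vimage_algebra (space M) X borel) \<subseteq> sets M"
      using measurable_sets[OF mX] by auto
  qed simp
  have fm: "finite_measure M" using P unfolding prob_space_def by simp
  interpret fms: finite_measure_subalgebra M F
    using fm sub by (simp add: finite_measure_subalgebra_def finite_measure_subalgebra_axioms_def)
  define hj where "hj j v = (if v = 0 then 0 else snorm s v powr (q - real s) * (v $ j)^(s-1))" for j and v :: "real^'d"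
  have hjm: "hj j \<in> borel_measurable borel" for j
  proof -
    have "{v \<in> space borel. v = (0::real^'d)} \<in> sets borel"
      using eq0_sets[of "\<lambda>v. v" borel] by simp
    then show ?thesis unfolding hj_def by (rule measurable_If[rotated 2]) measurable
  qed
  have gjF: "(\<lambda>w. hj j (X w)) \<in> borel_measurable F" for j
    unfolding F_def by (rule measurable_compose[OF measurable_vimage_algebra1 hjm]) simp
  have gjM[measurable]: "(\<lambda>w. hj j (X w)) \<in> borel_measurable M" for j
    by (rule measurable_compose[OF mX hjm])
  have Yj[measurable]: "(\<lambda>w. Y w $ j) \<in> borel_measurable M" for j by measurable
  have int: "integrable M (\<lambda>w. hj j (X w) * Y w $ j)" for j
  proof (rule Bochner_Integration.integrable_bound)
    show "integrable M (\<lambda>w. snorm s (X w) powr q + snorm s (Y w) powr q)" using gX gY unfolding good_def by auto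
    show "(\<lambda>w. hj j (X w) * Y w $ j) \<in> borel_measurable M" by measurable
    show "AE w in M. norm (hj j (X w) * Y w $ j) \<le> norm (snorm s (X w) powr q + snorm s (Y w) powr q)"
    proof (intro AE_I2)
      fix w
      have "\<bar>hj j (X w) * Y w $ j\<bar> \<le> snorm s (X w) powr q + snorm s (Y w) powr q"
        using hj_bound[of "X w" j "Y w"] young_q[OF snorm_nonneg snorm_nonneg, of s "X w" s "Y w"]
        unfolding hj_def by linarith
      then show "norm (hj j (X w) * Y w $ j) \<le> norm (snorm s (X w) powr q + snorm s (Y w) powr q)" by simp
    qed
  qed
  have zj: "(\<integral>w. hj j (X w) * Y w $ j \<partial>M) = 0" for j
  proof -
    have "(\<integral>w. hj j (X w) * real_cond_exp M F (\<lambda>w. Y w $ j) w \<partial>M) = (\<integral>w. hj j (X w) * Y w $ j \<partial>M)"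
      by (rule fms.real_cond_exp_intg(2)[OF int gjF Yj])
    moreover have "(\<integral>w. hj j (X w) * real_cond_exp M F (\<lambda>w. Y w $ j) w \<partial>M) = 0"
      using ce unfolding F_def by (intro integral_eq_zero_AE) (auto elim!: AE_mp)
    ultimately show ?thesis by simp
  qed
  have "Dd x y = (\<Sum>j\<in>UNIV. hj j x * y $ j)" for x y :: "real^'d"
    unfolding Dd_def hj_def by (cases "x = 0") (auto simp: sum_distrib_left mult.assoc)
  then have "(\<integral>w. Dd (X w) (Y w) \<partial>M) = (\<integral>w. (\<Sum>j\<in>UNIV. hj j (X w) * Y w $ j) \<partial>M)" by simp
  also have "\<dots> = (\<Sum>j\<in>UNIV. (\<integral>w. hj j (X w) * Y w $ j \<partial>M))"
    by (rule Bochner_Integration.integral_sum) (rule int)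
  also have "\<dots> = 0" using zj by simp
  finally show ?thesis .
qed

end

theorem mainTheorem9:
  fixes M :: "'a measure" and q :: real and s :: nat
    and X Y :: "'a \<Rightarrow> real ^ 'd"
  assumes "prob_space M"
    and "q \<ge> 2" and "s \<ge> 2" and "even s"
    and "X \<in> borel_measurable M" and "Y \<in> borel_measurable M"
    and "integrable M (\<lambda>\<omega>. snorm s (X \<omega>) powr q)"
    and "integrable M (\<lambda>\<omega>. snorm s (Y \<omega>) powr q)"
  shows "((Lq_norm M q (\<lambda>\<omega>. snorm s (X \<omega> + Y \<omega>)))\<^sup>2
           \<le> (Lq_norm M q (\<lambda>\<omega>. snorm s (X \<omega>)))\<^sup>2
             + (if Lq_norm M q (\<lambda>\<omega>. snorm s (X \<omega>)) = 0 then 0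
                else 2 * Lq_norm M q (\<lambda>\<omega>. snorm s (X \<omega>)) powr (2 - q)
                     * (\<integral>\<omega>. (if X \<omega> = 0 then 0
                              else snorm s (X \<omega>) powr (q - real s)
                                   * (\<Sum>j\<in>UNIV. (X \<omega> $ j) ^ (s - 1) * Y \<omega> $ j)) \<partial>M))
             + (max q (real s) - 1) * (Lq_norm M q (\<lambda>\<omega>. snorm s (Y \<omega>)))\<^sup>2)
     \<and> ((\<forall>j. AE \<omega> in M.
            real_cond_exp M (vimage_algebra (space M) X borel) (\<lambda>\<omega>. Y \<omega> $ j) \<omega> = 0)
         \<longrightarrow> (Lq_norm M q (\<lambda>\<omega>. snorm s (X \<omega> + Y \<omega>)))\<^sup>2
           \<le> (Lq_norm M q (\<lambda>\<omega>. snorm s (X \<omega>)))\<^sup>2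
             + (max q (real s) - 1) * (Lq_norm M q (\<lambda>\<omega>. snorm s (Y \<omega>)))\<^sup>2)"
proof -
  interpret qs q s using assms(2-4) by unfold_locales auto
  have gX: "good M X" and gY: "good M Y" unfolding good_def using assms(5-8) by auto
  have mid: "(\<lambda>\<omega>. if X \<omega> = 0 then 0 else snorm s (X \<omega>) powr (q - real s)
                 * (\<Sum>j\<in>UNIV. (X \<omega> $ j) ^ (s - 1) * Y \<omega> $ j)) = (\<lambda>\<omega>. Dd (X \<omega>) (Y \<omega>))"
    by (simp add: Dd_def)
  have mmq: "max q (real s) = mm" by (simp add: mm_def)
  note MI = main_ineq[OF gX gY]
  show ?thesis
    unfolding Lq_Nq mid mmq
  proof (intro conjI impI)
    show "(Nq M (\<lambda>\<omega>. X \<omega> + Y \<omega>))\<^sup>2 \<le> (Nq M X)\<^sup>2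
      + (if Nq M X = 0 then 0 else 2 * Nq M X powr (2 - q) * (\<integral>\<omega>. Dd (X \<omega>) (Y \<omega>) \<partial>M))
      + (mm - 1) * (Nq M Y)\<^sup>2" by (rule MI)
  next
    assume ce: "\<forall>j. AE \<omega> in M. real_cond_exp M (vimage_algebra (space M) X borel) (\<lambda>\<omega>. Y \<omega> $ j) \<omega> = 0"
    have z0: "(\<integral>w. Dd (X w) (Y w) \<partial>M) = 0" by (rule ce_zero[OF assms(1) gX gY ce])
    have z: "(if Nq M X = 0 then 0 else 2 * Nq M X powr (2 - q) * (\<integral>w. Dd (X w) (Y w) \<partial>M)) = 0"
      unfolding z0 by simp
    show "(Nq M (\<lambda>\<omega>. X \<omega> + Y \<omega>))\<^sup>2 \<le> (Nq M X)\<^sup>2 + (mm - 1) * (Nq M Y)\<^sup>2"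
      using MI unfolding z by simp
  qed
qed


end
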